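(* The functor $\mathrm{Ab}_{\mathrm{sT}}: \mathrm{sTCom} \to \mathrm{sAbGrp}$ is left adjoint to the functor $\mathrm{U}_{\mathrm{sT}}: \mathrm{sAbGrp} \to \mathrm{sTCom}$.
   Context: A simplicial $T$-complex is a simplicial set $X$ together with a set of marked ("thin") simplices such that: (1) every degenerate simplex is thin; (2) every horn $h:\Lambda^n_k \to X$ has a unique filler $\Delta^n \to X$ whose nondegenerate $n$-simplex is thin, denoted $\mathrm{fill}(h)$; (3) if all nondegenerate $(n-1)$-simplices of a horn $h:\Lambda^n_k\to X$ are thin, then the $k$th face of $\mathrm{fill}(h)$ is thin. Maps of simplicial $T$-complexes are simplicial maps sending thin simplices to thin simplices; the resulting category is $\mathrm{sTCom}$. $\mathrm{sAbGrp}$ denotes the category of simplicial abelian groups. The functor $\mathrm{U}_{\mathrm{sT}}: \mathrm{sAbGrp}\to\mathrm{sTCom}$ sends a simplicial abelian group $A$ to the simplicial $T$-complex whose underlying simplicial set is that of $A$ and whose thin simplices are the sums of degenerate simplices (this is a simplicial $T$-complex by a result of Ashley). The functor $\mathrm{Ab}_{\mathrm{sT}}:\mathrm{sTCom}\to\mathrm{sAbGrp}$ sends a simplicial $T$-complex $X$, with underlying simplicial set $|X|$ and natural map $\eta: |X| \to \mathbb{Z}[|X|]$, to the quotient $$\mathrm{Ab}_{\mathrm{sT}}(X) = \mathbb{Z}[X]\big/\langle \mathrm{fill}(\eta\circ h) - \eta\circ \mathrm{fill}(h) \mid h:\Lambda^n_k \to |X| \rangle,$$ where $\mathrm{fill}$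 denotes the unique thin filler of a horn (in $X$, respectively in $\mathrm{U}_{\mathrm{sT}}(\mathbb{Z}[X])$). *)

theory Defs
  imports "HOL-Algebra.Coset"
begin

text \<open>sd X n i : X_n -> X_(n-1) is the i-th face map (n >= 1, i <= n);
  ss X n i : X_n -> X_(n+1) is the i-th degeneracy map (i <= n).\<close>

record 'a sset =
  sS :: "nat \<Rightarrow> 'a set"
  sd :: "nat \<Rightarrow> nat \<Rightarrow> 'a \<Rightarrow> 'a"
  ss :: "nat \<Rightarrow> nat \<Rightarrow> 'a \<Rightarrow> 'a"

record 'a stcx = "'a sset" +
  sthin :: "nat \<Rightarrow> 'a set"

record 'a sab = "'a sset" +
  sgrp :: "nat \<Rightarrow> 'a monoid"

definition simplicial :: "('a, 'z) sset_scheme \<Rightarrow> bool" where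
  "simplicial X \<longleftrightarrow>
    (\<forall>n i x. x \<in> sS X (Suc n) \<and> i \<le> Suc n \<longrightarrow> sd X (Suc n) i x \<in> sS X n) \<and>
    (\<forall>n i x. x \<in> sS X n \<and> i \<le> n \<longrightarrow> ss X n i x \<in> sS X (Suc n)) \<and>
    (\<forall>n i j x. x \<in> sS X (Suc (Suc n)) \<and> i < j \<and> j \<le> Suc (Suc n) \<longrightarrow>
        sd X (Suc n) i (sd X (Suc (Suc n)) j x) = sd X (Suc n) (j - 1) (sd X (Suc (Suc n)) i x)) \<and>
    (\<forall>n i j x. x \<in> sS X (Suc n) \<and> i < j \<and> j \<le> Suc n \<longrightarrow>
        sd X (Suc (Suc n)) i (ss X (Suc n) j x) = ss X n (j - 1) (sd X (Suc n) i x)) \<and>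
    (\<forall>n j x. x \<in> sS X n \<and> j \<le> n \<longrightarrow>
        sd X (Suc n) j (ss X n j x) = x \<and> sd X (Suc n) (Suc j) (ss X n j x) = x) \<and>
    (\<forall>n i j x. x \<in> sS X (Suc n) \<and> Suc j < i \<and> i \<le> Suc (Suc n) \<longrightarrow>
        sd X (Suc (Suc n)) i (ss X (Suc n) j x) = ss X n j (sd X (Suc n) (i - 1) x)) \<and>
    (\<forall>n i j x. x \<in> sS X n \<and> i \<le> j \<and> j \<le> n \<longrightarrow>
        ss X (Suc n) i (ss X n j x) = ss X (Suc n) (Suc j) (ss X n i x))"

definition degenerate :: "('a, 'z) sset_scheme \<Rightarrow> nat \<Rightarrow> 'a \<Rightarrow> bool" where
  "degenerate X n x \<longleftrightarrow> (\<exists>m y i. n = Suc m \<and> y \<in> sS X m \<and> i \<le> m \<and> x = ss X m i y)"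

text \<open>A horn Lambda^(n+1)_k -> X, given by its compatible family of faces h i
  (i \<le> n+1, i \<noteq> k), each an n-simplex.\<close>

definition horn :: "('a, 'z) sset_scheme \<Rightarrow> nat \<Rightarrow> nat \<Rightarrow> (nat \<Rightarrow> 'a) \<Rightarrow> bool" where
  "horn X n k h \<longleftrightarrow> k \<le> Suc n \<and>
     (\<forall>i \<le> Suc n. i \<noteq> k \<longrightarrow> h i \<in> sS X n) \<and>
     (\<forall>i j. 0 < n \<and> i < j \<and> j \<le> Suc n \<and> i \<noteq> k \<and> j \<noteq> k \<longrightarrow>
        sd X n i (h j) = sd X n (j - 1) (h i))"

definition filler :: "('a, 'z) sset_scheme \<Rightarrow> nat \<Rightarrow> nat \<Rightarrow> (nat \<Rightarrow> 'a) \<Rightarrow> 'a \<Rightarrow> bool" where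
  "filler X n k h x \<longleftrightarrow> x \<in> sS X (Suc n) \<and> (\<forall>i \<le> Suc n. i \<noteq> k \<longrightarrow> sd X (Suc n) i x = h i)"

definition sTcomplex :: "('a, 'z) stcx_scheme \<Rightarrow> bool" where
  "sTcomplex X \<longleftrightarrow> simplicial X \<and>
     (\<forall>n. sthin X n \<subseteq> sS X n) \<and> sthin X 0 = {} \<and>
     (\<forall>n x. degenerate X n x \<longrightarrow> x \<in> sthin X n) \<and>
     (\<forall>n k h. horn X n k h \<longrightarrow> (\<exists>!x. filler X n k h x \<and> x \<in> sthin X (Suc n))) \<and>
     (\<forall>n k h x. horn X n k h \<and> (\<forall>i \<le> Suc n. i \<noteq> k \<longrightarrow> h i \<in> sthin X n) \<and>
        filler X n k h x \<and> x \<in> sthin X (Suc n) \<longrightarrow> sd X (Suc n) k x \<in> sthin X n)"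

definition fill :: "('a, 'z) stcx_scheme \<Rightarrow> nat \<Rightarrow> nat \<Rightarrow> (nat \<Rightarrow> 'a) \<Rightarrow> 'a" where
  "fill X n k h = (THE x. filler X n k h x \<and> x \<in> sthin X (Suc n))"

definition sAbGrp :: "'a sab \<Rightarrow> bool" where
  "sAbGrp A \<longleftrightarrow> simplicial A \<and>
     (\<forall>n. comm_group (sgrp A n) \<and> carrier (sgrp A n) = sS A n) \<and>
     (\<forall>n i. i \<le> Suc n \<longrightarrow> sd A (Suc n) i \<in> hom (sgrp A (Suc n)) (sgrp A n)) \<and>
     (\<forall>n i. i \<le> n \<longrightarrow> ss A n i \<in> hom (sgrp A n) (sgrp A (Suc n)))"

definition ssmap :: "('a, 'z) sset_scheme \<Rightarrow> ('b, 'w) sset_scheme \<Rightarrow> (nat \<Rightarrow> 'a \<Rightarrow> 'b) \<Rightarrow> bool" where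
  "ssmap X Y f \<longleftrightarrow>
     (\<forall>n x. x \<in> sS X n \<longrightarrow> f n x \<in> sS Y n) \<and>
     (\<forall>n i x. x \<in> sS X (Suc n) \<and> i \<le> Suc n \<longrightarrow> f n (sd X (Suc n) i x) = sd Y (Suc n) i (f (Suc n) x)) \<and>
     (\<forall>n i x. x \<in> sS X n \<and> i \<le> n \<longrightarrow> f (Suc n) (ss X n i x) = ss Y n i (f n x))"

definition sTmap :: "('a, 'z) stcx_scheme \<Rightarrow> ('b, 'w) stcx_scheme \<Rightarrow> (nat \<Rightarrow> 'a \<Rightarrow> 'b) \<Rightarrow> bool" where
  "sTmap X Y f \<longleftrightarrow> ssmap X Y f \<and> (\<forall>n x. x \<in> sthin X n \<longrightarrow> f n x \<in> sthin Y n)"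

definition sAbhom :: "'a sab \<Rightarrow> 'b sab \<Rightarrow> (nat \<Rightarrow> 'a \<Rightarrow> 'b) \<Rightarrow> bool" where
  "sAbhom A B g \<longleftrightarrow> ssmap A B g \<and> (\<forall>n. g n \<in> hom (sgrp A n) (sgrp B n))"

definition UsT :: "'a sab \<Rightarrow> 'a stcx" where
  "UsT A = \<lparr> sS = sS A, sd = sd A, ss = ss A,
     sthin = (\<lambda>n. if n = 0 then {} else
        {x. \<exists>xs. set xs \<subseteq> {y. degenerate A n y} \<and>
               x = foldr (\<lambda>a b. a \<otimes>\<^bsub>sgrp A n\<^esub> b) xs \<one>\<^bsub>sgrp A n\<^esub>}) \<rparr>"

definition zcarrier :: "('a, 'z) sset_scheme \<Rightarrow> nat \<Rightarrow> ('a \<Rightarrow> int) set" where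
  "zcarrier X n = {f. finite {x. f x \<noteq> 0} \<and> (\<forall>x. f x \<noteq> 0 \<longrightarrow> x \<in> sS X n)}"

definition zpush :: "('a \<Rightarrow> 'b) \<Rightarrow> ('a \<Rightarrow> int) \<Rightarrow> ('b \<Rightarrow> int)" where
  "zpush \<phi> f = (\<lambda>y. \<Sum>x \<in> {x. f x \<noteq> 0 \<and> \<phi> x = y}. f x)"

definition zgrp :: "('a, 'z) sset_scheme \<Rightarrow> nat \<Rightarrow> ('a \<Rightarrow> int) monoid" where
  "zgrp X n = \<lparr> carrier = zcarrier X n, mult = (\<lambda>f g x. f x + g x), one = (\<lambda>x. 0) \<rparr>"

definition ZZ :: "('a, 'z) sset_scheme \<Rightarrow> ('a \<Rightarrow> int) sab" where
  "ZZ X = \<lparr> sS = zcarrier X, sd = (\<lambda>n i. zpush (sd X n i)), ss = (\<lambda>n i. zpush (ss X n i)),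
            sgrp = zgrp X \<rparr>"

definition etaZ :: "'a \<Rightarrow> ('a \<Rightarrow> int)" where
  "etaZ x = (\<lambda>y. if y = x then 1 else 0)"

inductive_set relgen :: "'a stcx \<Rightarrow> (nat \<times> ('a \<Rightarrow> int)) set" for X :: "'a stcx" where
  gen: "horn X n k h \<Longrightarrow>
     (Suc n, \<lambda>y. fill (UsT (ZZ X)) n k (\<lambda>i. etaZ (h i)) y - etaZ (fill X n k h) y) \<in> relgen X"
| zero: "(n, \<lambda>y. 0) \<in> relgen X"
| add: "(n, f) \<in> relgen X \<Longrightarrow> (n, g) \<in> relgen X \<Longrightarrow> (n, \<lambda>y. f y + g y) \<in> relgen X"
| neg: "(n, f) \<in> relgen X \<Longrightarrow> (n, \<lambda>y. - f y) \<in> relgen X"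
| face: "(Suc n, f) \<in> relgen X \<Longrightarrow> i \<le> Suc n \<Longrightarrow> (n, zpush (sd X (Suc n) i) f) \<in> relgen X"
| degen: "(n, f) \<in> relgen X \<Longrightarrow> i \<le> n \<Longrightarrow> (Suc n, zpush (ss X n i) f) \<in> relgen X"

definition relN :: "'a stcx \<Rightarrow> nat \<Rightarrow> ('a \<Rightarrow> int) set" where
  "relN X n = {f. (n, f) \<in> relgen X}"

definition AbST :: "'a stcx \<Rightarrow> ('a \<Rightarrow> int) set sab" where
  "AbST X = \<lparr> sS = (\<lambda>n. rcosets\<^bsub>zgrp X n\<^esub> (relN X n)),
     sd = (\<lambda>n i C. r_coset (zgrp X (n - 1)) (relN X (n - 1)) (zpush (sd X n i) (SOME f. f \<in> C))),
     ss = (\<lambda>n i C. r_coset (zgrp X (Suc n)) (relN X (Suc n)) (zpush (ss X n i) (SOME f. f \<in> C))),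
     sgrp = (\<lambda>n. zgrp X n Mod relN X n) \<rparr>"

definition unitAb :: "'a stcx \<Rightarrow> nat \<Rightarrow> 'a \<Rightarrow> ('a \<Rightarrow> int) set" where
  "unitAb X n x = r_coset (zgrp X n) (relN X n) (etaZ x)"

end

theory Submission
  imports Defs "HOL-Algebra.FiniteProduct"
begin

section \<open>Generic simplicial identities\<close>

lemma simp_d_closed:
  "simplicial X \<Longrightarrow> x \<in> sS X (Suc n) \<Longrightarrow> i \<le> Suc n \<Longrightarrow> sd X (Suc n) i x \<in> sS X n"
  by (drule_tac simplicial_def[THEN iffD1, THEN conjunct1]) blast

lemma simp_s_closed:
  "simplicial X \<Longrightarrow> x \<in> sS X n \<Longrightarrow> i \<le> n \<Longrightarrow> ss X n i x \<in> sS X (Suc n)"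
  by (drule_tac simplicial_def[THEN iffD1, THEN conjunct2, THEN conjunct1]) blast

lemma simp_dd:
  "simplicial X \<Longrightarrow> x \<in> sS X (Suc (Suc n)) \<Longrightarrow> i < j \<Longrightarrow> j \<le> Suc (Suc n) \<Longrightarrow>
    sd X (Suc n) i (sd X (Suc (Suc n)) j x) = sd X (Suc n) (j - 1) (sd X (Suc (Suc n)) i x)"
  by (drule_tac simplicial_def[THEN iffD1, THEN conjunct2, THEN conjunct2, THEN conjunct1]) blast

lemma simp_ds_lt:
  "simplicial X \<Longrightarrow> x \<in> sS X (Suc n) \<Longrightarrow> i < j \<Longrightarrow> j \<le> Suc n \<Longrightarrow>
    sd X (Suc (Suc n)) i (ss X (Suc n) j x) = ss X n (j - 1) (sd X (Suc n) i x)"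
  by (drule_tac simplicial_def[THEN iffD1, THEN conjunct2, THEN conjunct2, THEN conjunct2, THEN conjunct1]) blast

lemma simp_ds_eq:
  "simplicial X \<Longrightarrow> x \<in> sS X n \<Longrightarrow> j \<le> n \<Longrightarrow> sd X (Suc n) j (ss X n j x) = x"
  by (drule_tac simplicial_def[THEN iffD1, THEN conjunct2, THEN conjunct2, THEN conjunct2, THEN conjunct2, THEN conjunct1]) blast

lemma simp_ds_suc:
  "simplicial X \<Longrightarrow> x \<in> sS X n \<Longrightarrow> j \<le> n \<Longrightarrow> sd X (Suc n) (Suc j) (ss X n j x) = x"
  by (drule_tac simplicial_def[THEN iffD1, THEN conjunct2, THEN conjunct2, THEN conjunct2, THEN conjunct2, THEN conjunct1]) blast

lemma simp_ds_gt:
  "simplicial X \<Longrightarrow> x \<in> sS X (Suc n) \<Longrightarrow> Suc j < i \<Longrightarrow> i \<le> Suc (Suc n) \<Longrightarrow>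
    sd X (Suc (Suc n)) i (ss X (Suc n) j x) = ss X n j (sd X (Suc n) (i - 1) x)"
  by (drule_tac simplicial_def[THEN iffD1, THEN conjunct2, THEN conjunct2, THEN conjunct2, THEN conjunct2, THEN conjunct2, THEN conjunct1]) blast

lemma simp_ss:
  "simplicial X \<Longrightarrow> x \<in> sS X n \<Longrightarrow> i \<le> j \<Longrightarrow> j \<le> n \<Longrightarrow>
    ss X (Suc n) i (ss X n j x) = ss X (Suc n) (Suc j) (ss X n i x)"
  by (drule_tac simplicial_def[THEN iffD1, THEN conjunct2, THEN conjunct2, THEN conjunct2, THEN conjunct2, THEN conjunct2, THEN conjunct2]) blast

lemma UsT_simps[simp]:
  "sS (UsT A) = sS A" "sd (UsT A) = sd A" "ss (UsT A) = ss A"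
  by (simp_all add: UsT_def)

lemma sthin_UsT:
  "sthin (UsT A) n = (if n = 0 then {} else
        {x. \<exists>xs. set xs \<subseteq> {y. degenerate A n y} \<and>
               x = foldr (\<lambda>a b. a \<otimes>\<^bsub>sgrp A n\<^esub> b) xs \<one>\<^bsub>sgrp A n\<^esub>})"
  by (simp add: UsT_def)

lemma horn_UsT[simp]: "horn (UsT A) = horn A"
  by (simp add: horn_def fun_eq_iff)

lemma filler_UsT[simp]: "filler (UsT A) = filler A"
  by (simp add: filler_def fun_eq_iff)

section \<open>Simplicial abelian groups: thin fillers\<close>

definition thinS :: "'a sab \<Rightarrow> nat \<Rightarrow> 'a set" where
  "thinS A n = {x. \<exists>xs. set xs \<subseteq> {y. degenerate A n y} \<and>
               x = foldr (\<lambda>a b. a \<otimes>\<^bsub>sgrp A n\<^esub> b) xs \<one>\<^bsub>sgrp A n\<^esub>}"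

lemma sthin_UsT_Suc: "sthin (UsT A) (Suc n) = thinS A (Suc n)"
  by (simp add: sthin_UsT thinS_def)

definition op1 :: "'a sab \<Rightarrow> nat \<Rightarrow> nat \<Rightarrow> 'a \<Rightarrow> 'a" where
  "op1 A n r x = x \<otimes>\<^bsub>sgrp A (Suc n)\<^esub> inv\<^bsub>sgrp A (Suc n)\<^esub> (ss A n r (sd A (Suc n) r x))"

definition op2 :: "'a sab \<Rightarrow> nat \<Rightarrow> nat \<Rightarrow> 'a \<Rightarrow> 'a" where
  "op2 A n r x = x \<otimes>\<^bsub>sgrp A (Suc n)\<^esub> inv\<^bsub>sgrp A (Suc n)\<^esub> (ss A n (r - 1) (sd A (Suc n) r x))"

primrec P1 :: "'a sab \<Rightarrow> nat \<Rightarrow> nat \<Rightarrow> 'a \<Rightarrow> 'a" where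
  "P1 A n 0 x = x"
| "P1 A n (Suc r) x = op1 A n r (P1 A n r x)"

primrec P2 :: "'a sab \<Rightarrow> nat \<Rightarrow> nat \<Rightarrow> 'a \<Rightarrow> 'a" where
  "P2 A n 0 x = x"
| "P2 A n (Suc q) x = op2 A n (Suc n - q) (P2 A n q x)"

locale sabg =
  fixes A :: "'a sab"
  assumes sab: "sAbGrp A"
begin

lemma cg: "comm_group (sgrp A n)"
  using sab unfolding sAbGrp_def by blast

lemma carr: "carrier (sgrp A n) = sS A n"
  using sab unfolding sAbGrp_def by blast

lemma smp: "simplicial A"
  using sab unfolding sAbGrp_def by blast

lemma grp: "group (sgrp A n)"
  using cg comm_group_def by blast

lemma d_hom: "i \<le> Suc n \<Longrightarrow> group_hom (sgrp A (Suc n)) (sgrp A n) (sd A (Suc n) i)"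
proof -
  assume "i \<le> Suc n"
  then have "sd A (Suc n) i \<in> hom (sgrp A (Suc n)) (sgrp A n)" using sab unfolding sAbGrp_def by blast
  then show ?thesis using grp unfolding group_hom_def group_hom_axioms_def by blast
qed

lemma s_hom: "i \<le> n \<Longrightarrow> group_hom (sgrp A n) (sgrp A (Suc n)) (ss A n i)"
proof -
  assume "i \<le> n"
  then have "ss A n i \<in> hom (sgrp A n) (sgrp A (Suc n))" using sab unfolding sAbGrp_def by blast
  then show ?thesis using grp unfolding group_hom_def group_hom_axioms_def by blast
qed

lemma d_closed: "x \<in> sS A (Suc n) \<Longrightarrow> i \<le> Suc n \<Longrightarrow> sd A (Suc n) i x \<in> sS A n"
  by (rule simp_d_closed[OF smp])
lemma s_closed: "x \<in> sS A n \<Longrightarrow> i \<le> n \<Longrightarrow> ss A n i x \<in> sS A (Suc n)"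
  by (rule simp_s_closed[OF smp])

lemma d_mult: "x \<in> sS A (Suc n) \<Longrightarrow> y \<in> sS A (Suc n) \<Longrightarrow> i \<le> Suc n \<Longrightarrow>
  sd A (Suc n) i (x \<otimes>\<^bsub>sgrp A (Suc n)\<^esub> y) = sd A (Suc n) i x \<otimes>\<^bsub>sgrp A n\<^esub> sd A (Suc n) i y"
  by (simp add: group_hom.hom_mult[OF d_hom] carr)
lemma d_inv: "x \<in> sS A (Suc n) \<Longrightarrow> i \<le> Suc n \<Longrightarrow>
  sd A (Suc n) i (inv\<^bsub>sgrp A (Suc n)\<^esub> x) = inv\<^bsub>sgrp A n\<^esub> sd A (Suc n) i x"
  by (simp add: group_hom.hom_inv[OF d_hom] carr)
lemma d_one: "i \<le> Suc n \<Longrightarrow> sd A (Suc n) i \<one>\<^bsub>sgrp A (Suc n)\<^esub> = \<one>\<^bsub>sgrp A n\<^esub>"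
  by (simp add: group_hom.hom_one[OF d_hom])
lemma s_mult: "x \<in> sS A n \<Longrightarrow> y \<in> sS A n \<Longrightarrow> i \<le> n \<Longrightarrow>
  ss A n i (x \<otimes>\<^bsub>sgrp A n\<^esub> y) = ss A n i x \<otimes>\<^bsub>sgrp A (Suc n)\<^esub> ss A n i y"
  by (simp add: group_hom.hom_mult[OF s_hom] carr)
lemma s_inv: "x \<in> sS A n \<Longrightarrow> i \<le> n \<Longrightarrow>
  ss A n i (inv\<^bsub>sgrp A n\<^esub> x) = inv\<^bsub>sgrp A (Suc n)\<^esub> ss A n i x"
  by (simp add: group_hom.hom_inv[OF s_hom] carr)
lemma s_one: "i \<le> n \<Longrightarrow> ss A n i \<one>\<^bsub>sgrp A n\<^esub> = \<one>\<^bsub>sgrp A (Suc n)\<^esub>"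
  by (simp add: group_hom.hom_one[OF s_hom])

lemma m_closed: "x \<in> sS A n \<Longrightarrow> y \<in> sS A n \<Longrightarrow> x \<otimes>\<^bsub>sgrp A n\<^esub> y \<in> sS A n"
  unfolding carr[symmetric] by (rule monoid.m_closed[OF group.is_monoid[OF grp]])
lemma i_closed: "x \<in> sS A n \<Longrightarrow> inv\<^bsub>sgrp A n\<^esub> x \<in> sS A n"
  unfolding carr[symmetric] by (rule group.inv_closed[OF grp])
lemma o_closed: "\<one>\<^bsub>sgrp A n\<^esub> \<in> sS A n"
  unfolding carr[symmetric] by (rule monoid.one_closed[OF group.is_monoid[OF grp]])

lemma dd: "x \<in> sS A (Suc (Suc n)) \<Longrightarrow> i < j \<Longrightarrow> j \<le> Suc (Suc n) \<Longrightarrow>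
    sd A (Suc n) i (sd A (Suc (Suc n)) j x) = sd A (Suc n) (j - 1) (sd A (Suc (Suc n)) i x)"
  by (rule simp_dd[OF smp])
lemma ds_lt: "x \<in> sS A (Suc n) \<Longrightarrow> i < j \<Longrightarrow> j \<le> Suc n \<Longrightarrow>
    sd A (Suc (Suc n)) i (ss A (Suc n) j x) = ss A n (j - 1) (sd A (Suc n) i x)"
  by (rule simp_ds_lt[OF smp])
lemma ds_eq: "x \<in> sS A n \<Longrightarrow> j \<le> n \<Longrightarrow> sd A (Suc n) j (ss A n j x) = x"
  by (rule simp_ds_eq[OF smp])
lemma ds_suc: "x \<in> sS A n \<Longrightarrow> j \<le> n \<Longrightarrow> sd A (Suc n) (Suc j) (ss A n j x) = x"
  by (rule simp_ds_suc[OF smp])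
lemma ds_gt: "x \<in> sS A (Suc n) \<Longrightarrow> Suc j < i \<Longrightarrow> i \<le> Suc (Suc n) \<Longrightarrow>
    sd A (Suc (Suc n)) i (ss A (Suc n) j x) = ss A n j (sd A (Suc n) (i - 1) x)"
  by (rule simp_ds_gt[OF smp])
lemma sss: "x \<in> sS A n \<Longrightarrow> i \<le> j \<Longrightarrow> j \<le> n \<Longrightarrow>
    ss A (Suc n) i (ss A n j x) = ss A (Suc n) (Suc j) (ss A n i x)"
  by (rule simp_ss[OF smp])

end


context sabg
begin

abbreviation "mA n x y \<equiv> x \<otimes>\<^bsub>sgrp A n\<^esub> y"
abbreviation "iA n x \<equiv> inv\<^bsub>sgrp A n\<^esub> x"
abbreviation "eA n \<equiv> \<one>\<^bsub>sgrp A n\<^esub>"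

lemma g_l_one: "x \<in> sS A n \<Longrightarrow> mA n (eA n) x = x"
  unfolding carr[symmetric] by (rule monoid.l_one[OF group.is_monoid[OF grp]])
lemma g_r_one: "x \<in> sS A n \<Longrightarrow> mA n x (eA n) = x"
  unfolding carr[symmetric] by (rule monoid.r_one[OF group.is_monoid[OF grp]])
lemma g_assoc: "x \<in> sS A n \<Longrightarrow> y \<in> sS A n \<Longrightarrow> z \<in> sS A n \<Longrightarrow> mA n (mA n x y) z = mA n x (mA n y z)"
  unfolding carr[symmetric] by (rule monoid.m_assoc[OF group.is_monoid[OF grp]])
lemma g_comm: "x \<in> sS A n \<Longrightarrow> y \<in> sS A n \<Longrightarrow> mA n x y = mA n y x"
  unfolding carr[symmetric] by (rule comm_monoid.m_comm[OF comm_group.axioms(1)[OF cg]])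
lemma g_r_inv: "x \<in> sS A n \<Longrightarrow> mA n x (iA n x) = eA n"
  unfolding carr[symmetric] by (rule group.r_inv[OF grp])
lemma g_l_inv: "x \<in> sS A n \<Longrightarrow> mA n (iA n x) x = eA n"
  unfolding carr[symmetric] by (rule group.l_inv[OF grp])
lemma g_inv_mult: "x \<in> sS A n \<Longrightarrow> y \<in> sS A n \<Longrightarrow> iA n (mA n x y) = mA n (iA n x) (iA n y)"
  unfolding carr[symmetric] by (rule comm_group.inv_mult[OF cg])
lemma g_inv_one: "iA n (eA n) = eA n"
  by (rule monoid.inv_one[OF group.is_monoid[OF grp]])
lemma g_inv_inv: "x \<in> sS A n \<Longrightarrow> iA n (iA n x) = x"
  unfolding carr[symmetric] by (rule group.inv_inv[OF grp])

lemma g_cancel1: "a \<in> sS A n \<Longrightarrow> b \<in> sS A n \<Longrightarrow> mA n a (mA n b (iA n a)) = b"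
proof -
  assume a: "a \<in> sS A n" and b: "b \<in> sS A n"
  have "mA n b (iA n a) = mA n (iA n a) b" using a b i_closed g_comm by blast
  then have "mA n a (mA n b (iA n a)) = mA n (mA n a (iA n a)) b" using a b i_closed g_assoc by simp
  then show ?thesis using a b g_r_inv g_l_one by simp
qed

lemma foldr_closed: "set xs \<subseteq> sS A n \<Longrightarrow> foldr (\<lambda>a b. mA n a b) xs (eA n) \<in> sS A n"
  by (induction xs) (auto intro: m_closed o_closed)

lemma foldr_app: "set xs \<subseteq> sS A n \<Longrightarrow> set ys \<subseteq> sS A n \<Longrightarrow>
   foldr (\<lambda>a b. mA n a b) (xs @ ys) (eA n) =
   mA n (foldr (\<lambda>a b. mA n a b) xs (eA n)) (foldr (\<lambda>a b. mA n a b) ys (eA n))"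
proof (induction xs)
  case Nil then show ?case using foldr_closed g_l_one by simp
next
  case (Cons a xs) then show ?case using foldr_closed g_assoc by simp
qed

lemma foldr_inv: "set xs \<subseteq> sS A n \<Longrightarrow>
   iA n (foldr (\<lambda>a b. mA n a b) xs (eA n)) = foldr (\<lambda>a b. mA n a b) (map (iA n) xs) (eA n)"
proof (induction xs)
  case Nil then show ?case using g_inv_one by simp
next
  case (Cons a xs) then show ?case using foldr_closed g_inv_mult by simp
qed

lemma degen_carr: "degenerate A n y \<Longrightarrow> y \<in> sS A n"
  unfolding degenerate_def using s_closed by blast

lemma degen_inv: "degenerate A n y \<Longrightarrow> degenerate A n (iA n y)"
  unfolding degenerate_def using s_inv i_closed by fastforce

lemma thin_carr: "x \<in> thinS A n \<Longrightarrow> x \<in> sS A n"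
  unfolding thinS_def using foldr_closed degen_carr by blast

lemma thin_one: "eA n \<in> thinS A n"
  unfolding thinS_def by (rule CollectI, rule exI[of _ "[]"]) simp

lemma thin_mult: "x \<in> thinS A n \<Longrightarrow> y \<in> thinS A n \<Longrightarrow> mA n x y \<in> thinS A n"
proof -
  assume "x \<in> thinS A n" "y \<in> thinS A n"
  then obtain xs ys where "set xs \<subseteq> {y. degenerate A n y}" "x = foldr (\<lambda>a b. mA n a b) xs (eA n)"
    "set ys \<subseteq> {y. degenerate A n y}" "y = foldr (\<lambda>a b. mA n a b) ys (eA n)"
    unfolding thinS_def by blast
  moreover then have "set xs \<subseteq> sS A n" "set ys \<subseteq> sS A n" using degen_carr by auto
  ultimately show ?thesis unfolding thinS_def
    by (intro CollectI exI[of _ "xs @ ys"]) (auto simp add: foldr_app simp del: foldr_append)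
qed

lemma thin_inv: "x \<in> thinS A n \<Longrightarrow> iA n x \<in> thinS A n"
proof -
  assume "x \<in> thinS A n"
  then obtain xs where "set xs \<subseteq> {y. degenerate A n y}" "x = foldr (\<lambda>a b. mA n a b) xs (eA n)"
    unfolding thinS_def by blast
  moreover then have "set xs \<subseteq> sS A n" using degen_carr by auto
  ultimately show ?thesis unfolding thinS_def
    by (intro CollectI exI[of _ "map (iA n) xs"]) (auto simp add: foldr_inv degen_inv)
qed

lemma thin_degen: "z \<in> sS A m \<Longrightarrow> i \<le> m \<Longrightarrow> ss A m i z \<in> thinS A (Suc m)"
  unfolding thinS_def
  by (intro CollectI exI[of _ "[ss A m i z]"])
     (auto simp add: degenerate_def g_r_one s_closed)

end


context sabg
begin

lemma horn_compat:
  "horn A n k h \<Longrightarrow> 0 < n \<Longrightarrow> i < j \<Longrightarrow> j \<le> Suc n \<Longrightarrow> i \<noteq> k \<Longrightarrow> j \<noteq> k \<Longrightarrow>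
   sd A n i (h j) = sd A n (j - 1) (h i)"
  unfolding horn_def by blast

lemma horn_in: "horn A n k h \<Longrightarrow> i \<le> Suc n \<Longrightarrow> i \<noteq> k \<Longrightarrow> h i \<in> sS A n"
  unfolding horn_def by blast

lemma stage1:
  assumes hn: "horn A n k h"
  shows "r \<le> k \<Longrightarrow> \<exists>w \<in> thinS A (Suc n). \<forall>i<r. sd A (Suc n) i w = h i"
proof (induction r)
  case 0 show ?case using thin_one by blast
next
  case (Suc r)
  from Suc obtain w where w: "w \<in> thinS A (Suc n)" "\<forall>i<r. sd A (Suc n) i w = h i" by auto
  have rn: "r \<le> n" "r < k" "k \<le> Suc n" using Suc.prems hn unfolding horn_def by auto
  have hr: "h r \<in> sS A n" using hn rn horn_in by simp
  have wS: "w \<in> sS A (Suc n)" using thin_carr w by blast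
  define z where "z = mA n (h r) (iA n (sd A (Suc n) r w))"
  have zS: "z \<in> sS A n" unfolding z_def using hr d_closed wS rn m_closed i_closed by simp
  define w' where "w' = mA (Suc n) w (ss A n r z)"
  have w'T: "w' \<in> thinS A (Suc n)" unfolding w'_def using thin_mult w thin_degen zS rn by blast
  have "\<forall>i<Suc r. sd A (Suc n) i w' = h i"
  proof (intro allI impI)
    fix i assume "i < Suc r"
    then consider "i = r" | "i < r" by linarith
    then show "sd A (Suc n) i w' = h i"
    proof cases
      case 1
      have "sd A (Suc n) i w' = mA n (sd A (Suc n) r w) z"
        unfolding w'_def using d_mult wS s_closed zS ds_eq 1 rn by simp
      also have "\<dots> = h r" unfolding z_def using g_cancel1 hr d_closed wS rn by simp
      finally show ?thesis using 1 by simp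
    next
      case 2
      then obtain n' where n': "n = Suc n'" using rn by (cases n) auto
      have hr': "h r \<in> sS A (Suc n')" using hr n' by simp
      have hi': "h i \<in> sS A (Suc n')" using hn 2 rn horn_in n' by simp
      have wS': "w \<in> sS A (Suc (Suc n'))" using wS n' by simp
      have rl: "r \<le> Suc n'" "r \<le> Suc (Suc n')" "r - 1 \<le> n'" "r - 1 \<le> Suc n'" using rn n' by auto
      have il: "i \<le> Suc n'" "i \<le> Suc (Suc n')" using 2 rn n' by auto
      have dw: "sd A (Suc (Suc n')) r w \<in> sS A (Suc n')" using d_closed[OF wS' rl(2)] .
      have zS': "z \<in> sS A (Suc n')" using zS n' by simp
      have z': "z = mA (Suc n') (h r) (iA (Suc n') (sd A (Suc (Suc n')) r w))" using z_def n' by simp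
      have w'': "w' = mA (Suc (Suc n')) w (ss A (Suc n') r z)" using w'_def n' by simp
      have "sd A (Suc n') i z = mA n' (sd A (Suc n') i (h r)) (iA n' (sd A (Suc n') i (sd A (Suc (Suc n')) r w)))"
        unfolding z' using d_mult[OF hr' i_closed[OF dw] il(1)] d_inv[OF dw il(1)] by simp
      also have "sd A (Suc n') i (h r) = sd A (Suc n') (r - 1) (h i)"
        using horn_compat[OF hn, of i r] n' 2 rn by simp
      also have "sd A (Suc n') i (sd A (Suc (Suc n')) r w) = sd A (Suc n') (r-1) (h i)"
        using dd[OF wS', of i r] 2 rl w n' by simp
      also have "mA n' (sd A (Suc n') (r - 1) (h i)) (iA n' (sd A (Suc n') (r - 1) (h i))) = eA n'"
        using g_r_inv[OF d_closed[OF hi' rl(4)]] .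
      finally have dz: "sd A (Suc n') i z = eA n'" .
      have "sd A (Suc (Suc n')) i (ss A (Suc n') r z) = ss A n' (r-1) (sd A (Suc n') i z)"
        using ds_lt[OF zS', of i r] 2 rl by simp
      also have "\<dots> = eA (Suc n')" using dz s_one[OF rl(3)] by simp
      finally have e2: "sd A (Suc (Suc n')) i (ss A (Suc n') r z) = eA (Suc n')" .
      have "sd A (Suc (Suc n')) i w' = mA (Suc n') (sd A (Suc (Suc n')) i w) (sd A (Suc (Suc n')) i (ss A (Suc n') r z))"
        unfolding w'' using d_mult[OF wS' s_closed[OF zS' rl(1)] il(2)] .
      also have "\<dots> = h i" using e2 w 2 n' g_r_one[OF hi'] by simp
      finally show ?thesis using n' by simp
    qed
  qed
  then show ?case using w'T by blast
qed

lemma stage2: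
  assumes hn: "horn A n k h"
  shows "q \<le> Suc n - k \<Longrightarrow> \<exists>w \<in> thinS A (Suc n). (\<forall>i<k. sd A (Suc n) i w = h i) \<and>
           (\<forall>i. Suc n - q < i \<and> i \<le> Suc n \<longrightarrow> sd A (Suc n) i w = h i)"
proof (induction q)
  case 0
  have "k \<le> Suc n" using hn unfolding horn_def by auto
  then show ?case using stage1[OF hn, of k] by auto
next
  case (Suc q)
  from Suc obtain w where w: "w \<in> thinS A (Suc n)" "\<forall>i<k. sd A (Suc n) i w = h i"
     "\<forall>i. Suc n - q < i \<and> i \<le> Suc n \<longrightarrow> sd A (Suc n) i w = h i" by auto
  define r where "r = Suc n - q"
  have rn: "k < r" "r \<le> Suc n" "r - 1 \<le> n" "1 \<le> r" "k \<le> Suc n" using Suc.prems hn unfolding horn_def r_def by auto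
  have hr: "h r \<in> sS A n" using hn rn horn_in by simp
  have wS: "w \<in> sS A (Suc n)" using thin_carr w by blast
  define z where "z = mA n (h r) (iA n (sd A (Suc n) r w))"
  have zS: "z \<in> sS A n" unfolding z_def using hr d_closed wS rn m_closed i_closed by simp
  define w' where "w' = mA (Suc n) w (ss A n (r - 1) z)"
  have w'T: "w' \<in> thinS A (Suc n)" unfolding w'_def using thin_mult w thin_degen zS rn by blast
  have main: "sd A (Suc n) i w' = h i" if iq: "i < k \<or> (r \<le> i \<and> i \<le> Suc n)" for i
  proof -
    consider "i = r" | "i < k" | "r < i" "i \<le> Suc n" using iq by linarith
    then show ?thesis
    proof cases
      case 1
      have "sd A (Suc n) r (ss A n (r - 1) z) = z" using ds_suc[OF zS rn(3)] rn by simp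
      then have "sd A (Suc n) i w' = mA n (sd A (Suc n) r w) z"
        unfolding w'_def using d_mult wS s_closed zS 1 rn by simp
      also have "\<dots> = h r" unfolding z_def using g_cancel1 hr d_closed wS rn by simp
      finally show ?thesis using 1 by simp
    next
      case 2
      then obtain n' where n': "n = Suc n'" using rn by (cases n) auto
      have hr': "h r \<in> sS A (Suc n')" using hr n' by simp
      have hi': "h i \<in> sS A (Suc n')" using hn 2 rn horn_in n' by simp
      have wS': "w \<in> sS A (Suc (Suc n'))" using wS n' by simp
      have rl: "r - 1 \<le> Suc n'" "r \<le> Suc (Suc n')" "r - 1 - 1 \<le> n'" "r - 1 \<le> Suc n'" using rn n' by auto
      have il: "i \<le> Suc n'" "i \<le> Suc (Suc n')" "i < r - 1" "i < r" using 2 rn n' by auto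
      have dw: "sd A (Suc (Suc n')) r w \<in> sS A (Suc n')" using d_closed[OF wS' rl(2)] .
      have zS': "z \<in> sS A (Suc n')" using zS n' by simp
      have z': "z = mA (Suc n') (h r) (iA (Suc n') (sd A (Suc (Suc n')) r w))" using z_def n' by simp
      have w'': "w' = mA (Suc (Suc n')) w (ss A (Suc n') (r - 1) z)" using w'_def n' by simp
      have "sd A (Suc n') i z = mA n' (sd A (Suc n') i (h r)) (iA n' (sd A (Suc n') i (sd A (Suc (Suc n')) r w)))"
        unfolding z' using d_mult[OF hr' i_closed[OF dw] il(1)] d_inv[OF dw il(1)] by simp
      also have "sd A (Suc n') i (h r) = sd A (Suc n') (r - 1) (h i)"
        using horn_compat[OF hn, of i r] n' 2 rn il by simp
      also have "sd A (Suc n') i (sd A (Suc (Suc n')) r w) = sd A (Suc n') (r-1) (h i)"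
        using dd[OF wS', of i r] 2 rl il w n' by simp
      also have "mA n' (sd A (Suc n') (r - 1) (h i)) (iA n' (sd A (Suc n') (r - 1) (h i))) = eA n'"
        using g_r_inv[OF d_closed[OF hi' rl(4)]] .
      finally have dz: "sd A (Suc n') i z = eA n'" .
      have "sd A (Suc (Suc n')) i (ss A (Suc n') (r - 1) z) = ss A n' (r - 1 - 1) (sd A (Suc n') i z)"
        using ds_lt[OF zS', of i "r - 1"] il rl by simp
      also have "\<dots> = eA (Suc n')" using dz s_one[OF rl(3)] by simp
      finally have e2: "sd A (Suc (Suc n')) i (ss A (Suc n') (r - 1) z) = eA (Suc n')" .
      have "sd A (Suc (Suc n')) i w' = mA (Suc n') (sd A (Suc (Suc n')) i w) (sd A (Suc (Suc n')) i (ss A (Suc n') (r - 1) z))"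
        unfolding w'' using d_mult[OF wS' s_closed[OF zS' rl(1)] il(2)] .
      also have "\<dots> = h i" using e2 w 2 n' g_r_one[OF hi'] by simp
      finally show ?thesis using n' by simp
    next
      case 3
      then obtain n' where n': "n = Suc n'" using rn by (cases n) auto
      have hr': "h r \<in> sS A (Suc n')" using hr n' by simp
      have hi': "h i \<in> sS A (Suc n')" using hn 3 rn horn_in n' by simp
      have wS': "w \<in> sS A (Suc (Suc n'))" using wS n' by simp
      have rl: "r - 1 \<le> Suc n'" "r \<le> Suc (Suc n')" "r - 1 \<le> n'" "r \<le> Suc n'" using rn n' 3 by auto
      have il: "i - 1 \<le> Suc n'" "i \<le> Suc (Suc n')" "Suc (r - 1) < i" "r < i" using 3 rn n' by auto
      have dw: "sd A (Suc (Suc n')) r w \<in> sS A (Suc n')" using d_closed[OF wS' rl(2)] .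
      have zS': "z \<in> sS A (Suc n')" using zS n' by simp
      have z': "z = mA (Suc n') (h r) (iA (Suc n') (sd A (Suc (Suc n')) r w))" using z_def n' by simp
      have w'': "w' = mA (Suc (Suc n')) w (ss A (Suc n') (r - 1) z)" using w'_def n' by simp
      have wi: "sd A (Suc n) i w = h i" using w(3) 3 r_def by auto
      have "sd A (Suc n') (i - 1) z = mA n' (sd A (Suc n') (i - 1) (h r)) (iA n' (sd A (Suc n') (i - 1) (sd A (Suc (Suc n')) r w)))"
        unfolding z' using d_mult[OF hr' i_closed[OF dw] il(1)] d_inv[OF dw il(1)] by simp
      also have "sd A (Suc n') (i - 1) (h r) = sd A (Suc n') r (h i)"
        using horn_compat[OF hn, of r i] n' 3 rn il by simp
      also have "sd A (Suc n') (i - 1) (sd A (Suc (Suc n')) r w) = sd A (Suc n') r (h i)"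
        using dd[OF wS', of r i] 3 rl il wi n' by simp
      also have "mA n' (sd A (Suc n') r (h i)) (iA n' (sd A (Suc n') r (h i))) = eA n'"
        using g_r_inv[OF d_closed[OF hi' rl(4)]] .
      finally have dz: "sd A (Suc n') (i - 1) z = eA n'" .
      have "sd A (Suc (Suc n')) i (ss A (Suc n') (r - 1) z) = ss A n' (r - 1) (sd A (Suc n') (i - 1) z)"
        using ds_gt[OF zS', of "r - 1" i] il rl by simp
      also have "\<dots> = eA (Suc n')" using dz s_one[OF rl(3)] by simp
      finally have e2: "sd A (Suc (Suc n')) i (ss A (Suc n') (r - 1) z) = eA (Suc n')" .
      have "sd A (Suc (Suc n')) i w' = mA (Suc n') (sd A (Suc (Suc n')) i w) (sd A (Suc (Suc n')) i (ss A (Suc n') (r - 1) z))"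
        unfolding w'' using d_mult[OF wS' s_closed[OF zS' rl(1)] il(2)] .
      also have "\<dots> = h i" using e2 wi n' g_r_one[OF hi'] by simp
      finally show ?thesis using n' by simp
    qed
  qed
  have "\<forall>i<k. sd A (Suc n) i w' = h i" using main by blast
  moreover have "\<forall>i. Suc n - Suc q < i \<and> i \<le> Suc n \<longrightarrow> sd A (Suc n) i w' = h i"
  proof (intro allI impI)
    fix i assume "Suc n - Suc q < i \<and> i \<le> Suc n"
    then have "r \<le> i \<and> i \<le> Suc n" unfolding r_def by arith
    then show "sd A (Suc n) i w' = h i" using main by blast
  qed
  ultimately show ?case using w'T by blast
qed

lemma thin_filler_exists:
  assumes hn: "horn A n k h"
  shows "\<exists>w \<in> thinS A (Suc n). filler A n k h w"
proof -
  have k: "k \<le> Suc n" using hn unfolding horn_def by auto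
  obtain w where w: "w \<in> thinS A (Suc n)" "\<forall>i<k. sd A (Suc n) i w = h i"
     "\<forall>i. Suc n - (Suc n - k) < i \<and> i \<le> Suc n \<longrightarrow> sd A (Suc n) i w = h i"
    using stage2[OF hn, of "Suc n - k"] by auto
  have "filler A n k h w" unfolding filler_def
  proof (intro conjI allI impI)
    show "w \<in> sS A (Suc n)" using thin_carr w by blast
    fix i assume "i \<le> Suc n" "i \<noteq> k"
    then show "sd A (Suc n) i w = h i" using w k by (cases "i < k") auto
  qed
  then show ?thesis using w by blast
qed

end


context sabg
begin

lemma hom_endo:
  "(\<And>x. x \<in> sS A m \<Longrightarrow> f x \<in> sS A m) \<Longrightarrow>
   (\<And>x y. x \<in> sS A m \<Longrightarrow> y \<in> sS A m \<Longrightarrow> f (mA m x y) = mA m (f x) (f y)) \<Longrightarrow>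
   f \<in> hom (sgrp A m) (sgrp A m)"
  unfolding hom_def carr by auto

lemma hom_closed': "f \<in> hom (sgrp A m) (sgrp A m') \<Longrightarrow> x \<in> sS A m \<Longrightarrow> f x \<in> sS A m'"
  unfolding hom_def carr by auto

lemma hom_mult': "f \<in> hom (sgrp A m) (sgrp A m') \<Longrightarrow> x \<in> sS A m \<Longrightarrow> y \<in> sS A m \<Longrightarrow>
   f (mA m x y) = mA m' (f x) (f y)"
  unfolding hom_def carr by auto

lemma hom_one': "f \<in> hom (sgrp A m) (sgrp A m') \<Longrightarrow> f (eA m) = eA m'"
  using hom_one[OF _ grp grp] by blast

lemma g_rearr: "x \<in> sS A m \<Longrightarrow> y \<in> sS A m \<Longrightarrow> a \<in> sS A m \<Longrightarrow> b \<in> sS A m \<Longrightarrow>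
   mA m (mA m x y) (mA m a b) = mA m (mA m x a) (mA m y b)"
proof -
  assume s: "x \<in> sS A m" "y \<in> sS A m" "a \<in> sS A m" "b \<in> sS A m"
  have "mA m (mA m x y) (mA m a b) = mA m x (mA m y (mA m a b))" using s g_assoc m_closed by simp
  also have "mA m y (mA m a b) = mA m (mA m y a) b" using s g_assoc by simp
  also have "mA m y a = mA m a y" using s g_comm by simp
  also have "mA m (mA m a y) b = mA m a (mA m y b)" using s g_assoc by simp
  also have "mA m x (mA m a (mA m y b)) = mA m (mA m x a) (mA m y b)" using s g_assoc m_closed by simp
  finally show ?thesis .
qed

lemma g_div_mult: "x \<in> sS A m \<Longrightarrow> y \<in> sS A m \<Longrightarrow> a \<in> sS A m \<Longrightarrow> b \<in> sS A m \<Longrightarrow>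
   mA m (mA m x y) (iA m (mA m a b)) = mA m (mA m x (iA m a)) (mA m y (iA m b))"
  using g_rearr g_inv_mult i_closed by simp

lemma op1_hom: "r \<le> n \<Longrightarrow> op1 A n r \<in> hom (sgrp A (Suc n)) (sgrp A (Suc n))"
proof (rule hom_endo)
  assume r: "r \<le> n"
  fix x assume x: "x \<in> sS A (Suc n)"
  then show "op1 A n r x \<in> sS A (Suc n)" 
    using r m_closed i_closed s_closed d_closed by (simp add: op1_def)
next
  assume r: "r \<le> n"
  fix x y assume x: "x \<in> sS A (Suc n)" and y: "y \<in> sS A (Suc n)"
  have dx: "sd A (Suc n) r x \<in> sS A n" "sd A (Suc n) r y \<in> sS A n" using d_closed x y r by auto
  have "ss A n r (sd A (Suc n) r (mA (Suc n) x y)) = mA (Suc n) (ss A n r (sd A (Suc n) r x)) (ss A n r (sd A (Suc n) r y))"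
    using d_mult[OF x y] s_mult[OF dx] r by simp
  then show "op1 A n r (mA (Suc n) x y) = mA (Suc n) (op1 A n r x) (op1 A n r y)"
    unfolding op1_def using g_div_mult x y s_closed dx r by simp
qed

lemma op2_hom: "r \<le> Suc n \<Longrightarrow> op2 A n r \<in> hom (sgrp A (Suc n)) (sgrp A (Suc n))"
proof (rule hom_endo)
  assume r: "r \<le> Suc n"
  fix x assume x: "x \<in> sS A (Suc n)"
  then show "op2 A n r x \<in> sS A (Suc n)" 
    using r m_closed i_closed s_closed d_closed by (simp add: op2_def)
next
  assume r: "r \<le> Suc n"
  then have r': "r - 1 \<le> n" by simp
  fix x y assume x: "x \<in> sS A (Suc n)" and y: "y \<in> sS A (Suc n)"
  have dx: "sd A (Suc n) r x \<in> sS A n" "sd A (Suc n) r y \<in> sS A n" using d_closed x y r by auto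
  have "ss A n (r - 1) (sd A (Suc n) r (mA (Suc n) x y)) = mA (Suc n) (ss A n (r - 1) (sd A (Suc n) r x)) (ss A n (r - 1) (sd A (Suc n) r y))"
    using d_mult[OF x y r] s_mult[OF dx r'] by simp
  then show "op2 A n r (mA (Suc n) x y) = mA (Suc n) (op2 A n r x) (op2 A n r y)"
    unfolding op2_def using g_div_mult x y s_closed dx r' by simp
qed

lemma P1_hom: "r \<le> Suc n \<Longrightarrow> P1 A n r \<in> hom (sgrp A (Suc n)) (sgrp A (Suc n))"
proof (induction r)
  case 0 show ?case by (rule hom_endo) auto
next
  case (Suc r)
  then have h1: "P1 A n r \<in> hom (sgrp A (Suc n)) (sgrp A (Suc n))" and h2: "op1 A n r \<in> hom (sgrp A (Suc n)) (sgrp A (Suc n))"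
    using op1_hom by auto
  show ?case
    by (rule hom_endo) (auto simp: hom_closed'[OF h1] hom_closed'[OF h2] hom_mult'[OF h1] hom_mult'[OF h2])
qed

lemma P2_hom: "P2 A n q \<in> hom (sgrp A (Suc n)) (sgrp A (Suc n))"
proof (induction q)
  case 0 show ?case by (rule hom_endo) auto
next
  case (Suc q)
  then have h1: "P2 A n q \<in> hom (sgrp A (Suc n)) (sgrp A (Suc n))" and h2: "op2 A n (Suc n - q) \<in> hom (sgrp A (Suc n)) (sgrp A (Suc n))"
    using op2_hom by auto
  show ?case
    by (rule hom_endo) (auto simp: hom_closed'[OF h1] hom_closed'[OF h2] hom_mult'[OF h1] hom_mult'[OF h2])
qed

definition "PP n k x = P2 A n (Suc n - k) (P1 A n k x)"

lemma PP_hom: "k \<le> Suc n \<Longrightarrow> PP n k \<in> hom (sgrp A (Suc n)) (sgrp A (Suc n))"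
proof -
  assume k: "k \<le> Suc n"
  have h1: "P1 A n k \<in> hom (sgrp A (Suc n)) (sgrp A (Suc n))" using P1_hom k by auto
  have h2: "P2 A n (Suc n - k) \<in> hom (sgrp A (Suc n)) (sgrp A (Suc n))" using P2_hom by auto
  show ?thesis unfolding PP_def
    by (rule hom_endo) (auto simp: hom_closed'[OF h1] hom_closed'[OF h2] hom_mult'[OF h1] hom_mult'[OF h2])
qed

lemma PP_fix:
  assumes x: "x \<in> sS A (Suc n)" and k: "k \<le> Suc n"
    and f: "\<forall>i \<le> Suc n. i \<noteq> k \<longrightarrow> sd A (Suc n) i x = eA n"
  shows "PP n k x = x"
proof -
  have a: "r \<le> k \<Longrightarrow> P1 A n r x = x" for r
  proof (induction r)
    case 0 then show ?case by simp
  next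
    case (Suc r)
    then have "r \<le> n" "r \<noteq> k" "r \<le> Suc n" using k by auto
    then show ?case using Suc f 
      using s_one g_inv_one g_r_one x by (simp add: op1_def)
  qed
  have b: "q \<le> Suc n - k \<Longrightarrow> P2 A n q x = x" for q
  proof (induction q)
    case 0 then show ?case by simp
  next
    case (Suc q)
    then have "Suc n - q - 1 \<le> n" "Suc n - q \<noteq> k" "Suc n - q \<le> Suc n" using k by auto
    then show ?case using Suc f 
      using s_one g_inv_one g_r_one x by (simp add: op2_def)
  qed
  show ?thesis unfolding PP_def using a b by simp
qed

lemma P1_img:
  assumes y: "y \<in> sS A n" and j: "j \<le> n"
  shows "r \<le> j \<Longrightarrow> \<exists>y' \<in> sS A n. P1 A n r (ss A n j y) = ss A n j y'"
proof (induction r)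
  case 0 then show ?case using y by auto
next
  case (Suc r)
  then obtain y' where y': "y' \<in> sS A n" "P1 A n r (ss A n j y) = ss A n j y'" by auto
  obtain n' where n': "n = Suc n'" using Suc.prems j by (cases n) auto
  have rl: "r < j" "j \<le> Suc n'" "r \<le> j - 1" "j - 1 \<le> n'" "r \<le> Suc n'" "r \<le> n'" using Suc.prems j n' by auto
  have y'': "y' \<in> sS A (Suc n')" using y' n' by simp
  have dy: "sd A (Suc n') r y' \<in> sS A n'" using d_closed[OF y'' rl(5)] .
  define v where "v = ss A n' r (sd A (Suc n') r y')"
  have vS: "v \<in> sS A (Suc n')" unfolding v_def using s_closed[OF dy rl(6)] .
  have "ss A (Suc n') r (sd A (Suc (Suc n')) r (ss A (Suc n') j y')) = ss A (Suc n') r (ss A n' (j - 1) (sd A (Suc n') r y'))"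
    using ds_lt[OF y'' rl(1) rl(2)] by simp
  also have "\<dots> = ss A (Suc n') (Suc (j - 1)) v" unfolding v_def using sss[OF dy rl(3) rl(4)] .
  also have "Suc (j - 1) = j" using rl by simp
  finally have e: "ss A (Suc n') r (sd A (Suc (Suc n')) r (ss A (Suc n') j y')) = ss A (Suc n') j v" .
  have "P1 A n (Suc r) (ss A n j y) = mA (Suc (Suc n')) (ss A (Suc n') j y') (iA (Suc (Suc n')) (ss A (Suc n') j v))"
    using y' e n' by (simp add: op1_def)
  also have "\<dots> = ss A (Suc n') j (mA (Suc n') y' (iA (Suc n') v))"
    using s_mult[OF y'' i_closed[OF vS] rl(2)] s_inv[OF vS rl(2)] by simp
  finally show ?case using n' m_closed[OF y'' i_closed[OF vS]] by auto
qed

lemma P1_one: "r \<le> Suc n \<Longrightarrow> P1 A n r (eA (Suc n)) = eA (Suc n)"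
  using hom_one'[OF P1_hom] by blast

lemma P2_one: "P2 A n q (eA (Suc n)) = eA (Suc n)"
  using hom_one'[OF P2_hom] by blast

lemma P1_kill:
  assumes y: "y \<in> sS A n" and j: "j < k" and k: "k \<le> Suc n"
  shows "P1 A n k (ss A n j y) = eA (Suc n)"
proof -
  have jn: "j \<le> n" using j k by simp
  obtain y' where y': "y' \<in> sS A n" "P1 A n j (ss A n j y) = ss A n j y'" using P1_img[OF y jn, of j] by auto
  have "P1 A n (Suc j) (ss A n j y) = mA (Suc n) (ss A n j y') (iA (Suc n) (ss A n j y'))"
    using y' ds_eq[OF y'(1) jn] by (simp add: op1_def)
  also have "\<dots> = eA (Suc n)" using g_r_inv s_closed y' jn by simp
  finally have e: "P1 A n (Suc j) (ss A n j y) = eA (Suc n)" .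
  have "Suc j + d \<le> Suc n \<Longrightarrow> P1 A n (Suc j + d) (ss A n j y) = eA (Suc n)" for d
  proof (induction d)
    case 0 then show ?case using e by simp
  next
    case (Suc d)
    then have "Suc j + d \<le> n" by simp
    then show ?case using Suc hom_one'[OF op1_hom] by simp
  qed
  from this[of "k - Suc j"] show ?thesis using j k by simp
qed

lemma P2_img:
  assumes u: "u \<in> sS A n" and j: "j \<le> n"
  shows "q \<le> n - j \<Longrightarrow> \<exists>u' \<in> sS A n. P2 A n q (ss A n j u) = ss A n j u'"
proof (induction q)
  case 0 then show ?case using u by auto
next
  case (Suc q)
  then obtain y' where y': "y' \<in> sS A n" "P2 A n q (ss A n j u) = ss A n j y'" by auto
  define r where "r = Suc n - q"
  obtain n' where n': "n = Suc n'" using Suc.prems j by (cases n) auto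
  have rl: "Suc j < r" "r \<le> Suc (Suc n')" "j \<le> r - 2" "r - 2 \<le> n'" "r - 1 \<le> Suc n'" "j \<le> Suc n'" "Suc (r - 2) = r - 1"
    using Suc.prems j n' unfolding r_def by auto
  have y'': "y' \<in> sS A (Suc n')" using y' n' by simp
  have dy: "sd A (Suc n') (r - 1) y' \<in> sS A n'" using d_closed[OF y'' rl(5)] .
  define v where "v = ss A n' (r - 2) (sd A (Suc n') (r - 1) y')"
  have vS: "v \<in> sS A (Suc n')" unfolding v_def using s_closed[OF dy rl(4)] .
  have "ss A (Suc n') (r - 1) (sd A (Suc (Suc n')) r (ss A (Suc n') j y')) = ss A (Suc n') (r - 1) (ss A n' j (sd A (Suc n') (r - 1) y'))"
    using ds_gt[OF y'' rl(1) rl(2)] by simp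
  also have "\<dots> = ss A (Suc n') j v" unfolding v_def using sss[OF dy rl(3) rl(4)] rl(7) by simp
  finally have e: "ss A (Suc n') (r - 1) (sd A (Suc (Suc n')) r (ss A (Suc n') j y')) = ss A (Suc n') j v" .
  have "P2 A n (Suc q) (ss A n j u) = mA (Suc (Suc n')) (ss A (Suc n') j y') (iA (Suc (Suc n')) (ss A (Suc n') j v))"
    using y' e n' by (simp add: op2_def r_def)
  also have "\<dots> = ss A (Suc n') j (mA (Suc n') y' (iA (Suc n') v))"
    using s_mult[OF y'' i_closed[OF vS] rl(6)] s_inv[OF vS rl(6)] by simp
  finally show ?case using n' m_closed[OF y'' i_closed[OF vS]] by auto
qed

lemma PP_kill:
  assumes y: "y \<in> sS A n" and j: "j \<le> n" and k: "k \<le> Suc n"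
  shows "PP n k (ss A n j y) = eA (Suc n)"
proof (cases "j < k")
  case True
  then show ?thesis unfolding PP_def using P1_kill[OF y True k] P2_one by simp
next
  case False
  obtain y' where y': "y' \<in> sS A n" "P1 A n k (ss A n j y) = ss A n j y'" using P1_img[OF y j, of k] False by auto
  obtain u where u: "u \<in> sS A n" "P2 A n (n - j) (ss A n j y') = ss A n j u" using P2_img[OF y'(1) j, of "n - j"] by auto
  have "P2 A n (Suc (n - j)) (ss A n j y') = mA (Suc n) (ss A n j u) (iA (Suc n) (ss A n (Suc n - (n - j) - 1) (sd A (Suc n) (Suc n - (n - j)) (ss A n j u))))"
    using u by (simp add: op2_def)
  also have "Suc n - (n - j) = Suc j" using j by simp
  also have "sd A (Suc n) (Suc j) (ss A n j u) = u" using ds_suc[OF u(1) j] .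
  also have "mA (Suc n) (ss A n j u) (iA (Suc n) (ss A n (Suc j - 1) u)) = eA (Suc n)" using g_r_inv s_closed u j by simp
  finally have e: "P2 A n (Suc (n - j)) (ss A n j y') = eA (Suc n)" .
  have "Suc (n - j) + d \<le> Suc n - k \<Longrightarrow> P2 A n (Suc (n - j) + d) (ss A n j y') = eA (Suc n)" for d
  proof (induction d)
    case 0 then show ?case using e by simp
  next
    case (Suc d)
    then show ?case using Suc hom_one'[OF op2_hom] by simp
  qed
  moreover have eq: "Suc (n - j) + (Suc n - k - Suc (n - j)) = Suc n - k" using False j k by arith
  ultimately have "P2 A n (Suc n - k) (ss A n j y') = eA (Suc n)"
    by (metis order_refl)
  then show ?thesis unfolding PP_def using y' by simp
qed

lemma PP_thin:
  assumes x: "x \<in> thinS A (Suc n)" and k: "k \<le> Suc n"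
  shows "PP n k x = eA (Suc n)"
proof -
  obtain xs where xs: "set xs \<subseteq> {y. degenerate A (Suc n) y}" "x = foldr (\<lambda>a b. mA (Suc n) a b) xs (eA (Suc n))"
    using x unfolding thinS_def by blast
  have hP: "PP n k \<in> hom (sgrp A (Suc n)) (sgrp A (Suc n))" using PP_hom k by simp
  have "set xs \<subseteq> {y. degenerate A (Suc n) y} \<Longrightarrow> PP n k (foldr (\<lambda>a b. mA (Suc n) a b) xs (eA (Suc n))) = eA (Suc n)"
  proof (induction xs)
    case Nil then show ?case using hom_one'[OF hP] by simp
  next
    case (Cons a xs)
    then have da: "degenerate A (Suc n) a" by simp
    then obtain y j where yj: "y \<in> sS A n" "j \<le> n" "a = ss A n j y" unfolding degenerate_def by auto
    have aS: "a \<in> sS A (Suc n)" using degen_carr da by simp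
    have "set xs \<subseteq> sS A (Suc n)" using Cons.prems degen_carr by auto
    then have fS: "foldr (\<lambda>a b. mA (Suc n) a b) xs (eA (Suc n)) \<in> sS A (Suc n)"
      using foldr_closed by blast
    have "PP n k (foldr (\<lambda>a b. mA (Suc n) a b) (a # xs) (eA (Suc n))) =
        mA (Suc n) (PP n k a) (PP n k (foldr (\<lambda>a b. mA (Suc n) a b) xs (eA (Suc n))))"
      using hom_mult'[OF hP aS fS] by simp
    also have "\<dots> = eA (Suc n)" using Cons PP_kill[OF yj(1) yj(2) k] yj(3) g_r_one o_closed by simp
    finally show ?case .
  qed
  then show ?thesis using xs by simp
qed

lemma thin_zero:
  assumes x: "x \<in> thinS A (Suc n)" and k: "k \<le> Suc n"
    and f: "\<forall>i \<le> Suc n. i \<noteq> k \<longrightarrow> sd A (Suc n) i x = eA n"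
  shows "x = eA (Suc n)"
  using PP_fix[OF thin_carr[OF x] k f] PP_thin[OF x k] by simp

lemma thin_filler_unique:
  assumes fx: "filler A n k h x" and tx: "x \<in> thinS A (Suc n)"
    and fy: "filler A n k h y" and ty: "y \<in> thinS A (Suc n)" and k: "k \<le> Suc n"
  shows "x = y"
proof -
  have xS: "x \<in> sS A (Suc n)" and yS: "y \<in> sS A (Suc n)" using thin_carr tx ty by auto
  define z where "z = mA (Suc n) x (iA (Suc n) y)"
  have tz: "z \<in> thinS A (Suc n)" unfolding z_def using thin_mult thin_inv tx ty by blast
  have "\<forall>i \<le> Suc n. i \<noteq> k \<longrightarrow> sd A (Suc n) i z = eA n"
  proof (intro allI impI)
    fix i assume i: "i \<le> Suc n" "i \<noteq> k"
    have "sd A (Suc n) i z = mA n (sd A (Suc n) i x) (iA n (sd A (Suc n) i y))"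
      unfolding z_def using d_mult[OF xS i_closed[OF yS] i(1)] d_inv[OF yS i(1)] by simp
    also have "\<dots> = mA n (sd A (Suc n) i y) (iA n (sd A (Suc n) i y))"
      using fx fy i unfolding filler_def by simp
    also have "\<dots> = eA n" using g_r_inv d_closed[OF yS i(1)] by simp
    finally show "sd A (Suc n) i z = eA n" .
  qed
  then have "z = eA (Suc n)" using thin_zero[OF tz k] by simp
  then have "mA (Suc n) z y = y" using g_l_one yS by simp
  moreover have "mA (Suc n) z y = x" unfolding z_def using g_assoc xS yS i_closed g_l_inv g_r_one by simp
  ultimately show ?thesis by simp
qed

lemma fill_UsT:
  assumes hn: "horn A n k h"
  shows "filler A n k h (fill (UsT A) n k h) \<and> fill (UsT A) n k h \<in> thinS A (Suc n)"
proof -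
  have k: "k \<le> Suc n" using hn unfolding horn_def by simp
  have ex: "\<exists>!x. filler A n k h x \<and> x \<in> thinS A (Suc n)"
    using thin_filler_exists[OF hn] thin_filler_unique k by blast
  show ?thesis unfolding fill_def filler_UsT sthin_UsT_Suc using theI'[OF ex] .
qed

lemma fill_UsT_unique:
  assumes hn: "horn A n k h" and "filler A n k h x" and "x \<in> thinS A (Suc n)"
  shows "fill (UsT A) n k h = x"
proof -
  have k: "k \<le> Suc n" using hn unfolding horn_def by simp
  show ?thesis using fill_UsT[OF hn] thin_filler_unique assms k by blast
qed

end


section \<open>Free simplicial abelian group\<close>

definition supp :: "('a \<Rightarrow> int) \<Rightarrow> 'a set" where "supp f = {x. f x \<noteq> 0}"

lemma zcarrier_iff: "f \<in> zcarrier X n \<longleftrightarrow> finite (supp f) \<and> supp f \<subseteq> sS X n"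
  unfolding zcarrier_def supp_def by auto

lemma zpush_sum:
  assumes "finite S" "supp f \<subseteq> S"
  shows "zpush \<phi> f y = (\<Sum>x\<in>S. if \<phi> x = y then f x else 0)"
proof -
  have "(\<Sum>x\<in>S. if \<phi> x = y then f x else 0) = (\<Sum>x\<in>{x\<in>S. \<phi> x = y}. f x)"
    using assms(1) by (simp add: sum.inter_filter)
  also have "\<dots> = (\<Sum>x\<in>{x. f x \<noteq> 0 \<and> \<phi> x = y}. f x)"
    using assms by (intro sum.mono_neutral_right) (auto simp: supp_def)
  finally show ?thesis unfolding zpush_def by simp
qed

lemma zpush_supp: assumes "zpush \<phi> f y \<noteq> 0" shows "\<exists>x. f x \<noteq> 0 \<and> \<phi> x = y"
proof (rule ccontr)
  assume "\<not> (\<exists>x. f x \<noteq> 0 \<and> \<phi> x = y)"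
  then have e: "{x. f x \<noteq> 0 \<and> \<phi> x = y} = {}" by blast
  have "zpush \<phi> f y = 0" by (simp only: zpush_def e sum.empty)
  with assms show False by simp
qed

lemma supp_zpush: "supp (zpush \<phi> f) \<subseteq> \<phi> ` supp f"
proof
  fix y assume "y \<in> supp (zpush \<phi> f)"
  then have "zpush \<phi> f y \<noteq> 0" unfolding supp_def by simp
  then obtain x where "f x \<noteq> 0" "\<phi> x = y" using zpush_supp[of \<phi> f y] by blast
  then have "x \<in> supp f" "y = \<phi> x" unfolding supp_def by auto
  then show "y \<in> \<phi> ` supp f" by (rule rev_image_eqI)
qed

lemma finite_supp_zpush: "finite (supp f) \<Longrightarrow> finite (supp (zpush \<phi> f))"
proof -
  assume "finite (supp f)"
  then have "finite (\<phi> ` supp f)" by (rule finite_imageI)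
  then show ?thesis by (rule finite_subset[OF supp_zpush])
qed

lemma zpush_add:
  assumes "finite (supp f)" "finite (supp g)"
  shows "zpush \<phi> (\<lambda>x. f x + g x) = (\<lambda>y. zpush \<phi> f y + zpush \<phi> g y)"
proof
  fix y
  let ?S = "supp f \<union> supp g"
  have fS: "finite ?S" using assms by simp
  have "supp (\<lambda>x. f x + g x) \<subseteq> ?S" unfolding supp_def by auto
  then have "zpush \<phi> (\<lambda>x. f x + g x) y = (\<Sum>x\<in>?S. if \<phi> x = y then f x + g x else 0)"
    by (rule zpush_sum[OF fS])
  also have "\<dots> = (\<Sum>x\<in>?S. if \<phi> x = y then f x else 0) + (\<Sum>x\<in>?S. if \<phi> x = y then g x else 0)"
    by (simp add: sum.distrib[symmetric]) (intro sum.cong, auto)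
  also have "\<dots> = zpush \<phi> f y + zpush \<phi> g y"
  proof -
    have a: "zpush \<phi> f y = (\<Sum>x\<in>?S. if \<phi> x = y then f x else 0)" by (rule zpush_sum[OF fS]) simp
    have b: "zpush \<phi> g y = (\<Sum>x\<in>?S. if \<phi> x = y then g x else 0)" by (rule zpush_sum[OF fS]) simp
    show ?thesis unfolding a b ..
  qed
  finally show "zpush \<phi> (\<lambda>x. f x + g x) y = zpush \<phi> f y + zpush \<phi> g y" .
qed

lemma zpush_neg: "zpush \<phi> (\<lambda>x. - f x) = (\<lambda>y. - zpush \<phi> f y)"
  unfolding zpush_def by (simp add: sum_negf)

lemma zpush_zero: "zpush \<phi> (\<lambda>x. 0) = (\<lambda>y. 0)"
  unfolding zpush_def by simp

lemma zpush_eta: "zpush \<phi> (etaZ x) = etaZ (\<phi> x)"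
proof
  fix y
  have "zpush \<phi> (etaZ x) y = (\<Sum>x'\<in>{x}. if \<phi> x' = y then etaZ x x' else 0)"
    by (rule zpush_sum) (auto simp: supp_def etaZ_def)
  then show "zpush \<phi> (etaZ x) y = etaZ (\<phi> x) y" by (simp add: etaZ_def)
qed

lemma zpush_cong: "(\<And>x. f x \<noteq> 0 \<Longrightarrow> \<phi> x = \<psi> x) \<Longrightarrow> zpush \<phi> f = zpush \<psi> f"
  unfolding zpush_def by (intro ext sum.cong) auto

lemma zpush_comp:
  assumes "finite (supp f)"
  shows "zpush \<phi> (zpush \<psi> f) = zpush (\<lambda>x. \<phi> (\<psi> x)) f"
proof
  fix z
  let ?S = "supp f"
  have "zpush \<phi> (zpush \<psi> f) z = (\<Sum>y\<in>\<psi> ` ?S. if \<phi> y = z then zpush \<psi> f y else 0)"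
    by (rule zpush_sum[OF finite_imageI[OF assms] supp_zpush])
  also have "\<dots> = (\<Sum>y\<in>\<psi> ` ?S. \<Sum>x\<in>?S. if \<phi> y = z \<and> \<psi> x = y then f x else 0)"
    using zpush_sum[OF assms order_refl, of \<psi>] by (intro sum.cong) (auto simp: sum.neutral)
  also have "\<dots> = (\<Sum>x\<in>?S. \<Sum>y\<in>\<psi> ` ?S. if \<phi> y = z \<and> \<psi> x = y then f x else 0)"
    by (rule sum.swap)
  also have "\<dots> = (\<Sum>x\<in>?S. if \<phi> (\<psi> x) = z then f x else 0)"
  proof (rule sum.cong)
    fix x assume x: "x \<in> ?S"
    have "(\<Sum>y\<in>\<psi> ` ?S. if \<phi> y = z \<and> \<psi> x = y then f x else 0) = (\<Sum>y\<in>\<psi> ` ?S. if y = \<psi> x then (if \<phi> (\<psi> x) = z then f x else 0) else 0)"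
      by (intro sum.cong) auto
    also have "\<dots> = (if \<phi> (\<psi> x) = z then f x else 0)" using x assms by (simp add: sum.delta')
    finally show "(\<Sum>y\<in>\<psi> ` ?S. if \<phi> y = z \<and> \<psi> x = y then f x else 0) = (if \<phi> (\<psi> x) = z then f x else 0)" .
  qed simp
  also have "\<dots> = zpush (\<lambda>x. \<phi> (\<psi> x)) f z" by (rule zpush_sum[OF assms order_refl, symmetric])
  finally show "zpush \<phi> (zpush \<psi> f) z = zpush (\<lambda>x. \<phi> (\<psi> x)) f z" .
qed

lemma zpush_zcarrier:
  assumes "f \<in> zcarrier X n" "\<And>x. x \<in> sS X n \<Longrightarrow> \<phi> x \<in> sS Y m"
  shows "zpush \<phi> f \<in> zcarrier Y m"
proof -
  have f: "finite (supp f)" "supp f \<subseteq> sS X n" using assms(1) unfolding zcarrier_iff by auto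
  have "supp (zpush \<phi> f) \<subseteq> \<phi> ` supp f" by (rule supp_zpush)
  also have "\<dots> \<subseteq> sS Y m" using f(2) assms(2) by blast
  finally show ?thesis unfolding zcarrier_iff using finite_supp_zpush[OF f(1)] by simp
qed

lemma zgrp_simps[simp]:
  "carrier (zgrp X n) = zcarrier X n"
  "mult (zgrp X n) = (\<lambda>f g x. f x + g x)"
  "one (zgrp X n) = (\<lambda>x. 0)"
  by (simp_all add: zgrp_def)

lemma zc_add: "f \<in> zcarrier X n \<Longrightarrow> g \<in> zcarrier X n \<Longrightarrow> (\<lambda>x. f x + g x) \<in> zcarrier X n"
proof -
  assume "f \<in> zcarrier X n" "g \<in> zcarrier X n"
  moreover have "supp (\<lambda>x. f x + g x) \<subseteq> supp f \<union> supp g" unfolding supp_def by auto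
  ultimately show ?thesis unfolding zcarrier_iff
    by (metis (no_types, lifting) finite_UnI le_sup_iff finite_subset subset_trans)
qed

lemma zc_neg: "f \<in> zcarrier X n \<Longrightarrow> (\<lambda>x. - f x) \<in> zcarrier X n"
  unfolding zcarrier_iff supp_def by simp

lemma zc_zero: "(\<lambda>x. 0) \<in> zcarrier X n"
  unfolding zcarrier_iff supp_def by simp

lemma zc_eta: "x \<in> sS X n \<Longrightarrow> etaZ x \<in> zcarrier X n"
  unfolding zcarrier_iff supp_def etaZ_def by auto

lemma zgrp_cg: "comm_group (zgrp X n)"
proof (rule comm_groupI)
  fix x y assume "x \<in> carrier (zgrp X n)" "y \<in> carrier (zgrp X n)"
  then show "x \<otimes>\<^bsub>zgrp X n\<^esub> y \<in> carrier (zgrp X n)" using zc_add by simp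
next
  show "\<one>\<^bsub>zgrp X n\<^esub> \<in> carrier (zgrp X n)" using zc_zero by simp
next
  fix x y z
  show "x \<otimes>\<^bsub>zgrp X n\<^esub> y \<otimes>\<^bsub>zgrp X n\<^esub> z = x \<otimes>\<^bsub>zgrp X n\<^esub> (y \<otimes>\<^bsub>zgrp X n\<^esub> z)"
    by (simp add: add.assoc)
next
  fix x y
  show "x \<otimes>\<^bsub>zgrp X n\<^esub> y = y \<otimes>\<^bsub>zgrp X n\<^esub> x" by (simp add: add.commute)
next
  fix x
  show "\<one>\<^bsub>zgrp X n\<^esub> \<otimes>\<^bsub>zgrp X n\<^esub> x = x" by simp
next
  fix x assume x: "x \<in> carrier (zgrp X n)"
  have "(\<lambda>y. - x y) \<in> carrier (zgrp X n)" using x zc_neg by simp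
  moreover have "(\<lambda>y. - x y) \<otimes>\<^bsub>zgrp X n\<^esub> x = \<one>\<^bsub>zgrp X n\<^esub>" by simp
  ultimately show "\<exists>y\<in>carrier (zgrp X n). y \<otimes>\<^bsub>zgrp X n\<^esub> x = \<one>\<^bsub>zgrp X n\<^esub>" by blast
qed

lemma zgrp_inv: "f \<in> zcarrier X n \<Longrightarrow> inv\<^bsub>zgrp X n\<^esub> f = (\<lambda>x. - f x)"
proof -
  assume f: "f \<in> zcarrier X n"
  interpret group "zgrp X n" using zgrp_cg comm_group_def by blast
  have "(\<lambda>x. - f x) \<otimes>\<^bsub>zgrp X n\<^esub> f = \<one>\<^bsub>zgrp X n\<^esub>" by simp
  then show ?thesis using f zc_neg by (intro inv_equality) simp_all
qed

lemma ZZ_simps[simp]: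
  "sS (ZZ X) = zcarrier X" "sd (ZZ X) n i = zpush (sd X n i)" "ss (ZZ X) n i = zpush (ss X n i)"
  "sgrp (ZZ X) = zgrp X"
  by (simp_all add: ZZ_def)

lemma zpush_hom:
  assumes "\<And>x. x \<in> sS X n \<Longrightarrow> \<phi> x \<in> sS X m"
  shows "zpush \<phi> \<in> hom (zgrp X n) (zgrp X m)"
  unfolding hom_def
proof (intro CollectI conjI ballI funcsetI)
  fix f assume "f \<in> carrier (zgrp X n)"
  then show "zpush \<phi> f \<in> carrier (zgrp X m)" using zpush_zcarrier[OF _ assms] by simp
next
  fix f g assume "f \<in> carrier (zgrp X n)" "g \<in> carrier (zgrp X n)"
  then have "finite (supp f)" "finite (supp g)" unfolding zgrp_simps zcarrier_iff by auto
  then show "zpush \<phi> (f \<otimes>\<^bsub>zgrp X n\<^esub> g) = zpush \<phi> f \<otimes>\<^bsub>zgrp X m\<^esub> zpush \<phi> g"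
    using zpush_add by simp
qed

lemma zsupp_in: "f \<in> zcarrier X n \<Longrightarrow> f x \<noteq> 0 \<Longrightarrow> x \<in> sS X n"
  unfolding zcarrier_def by blast

lemma zfin: "f \<in> zcarrier X n \<Longrightarrow> finite (supp f)"
  unfolding zcarrier_iff by blast

lemma zpush_id: "finite (supp f) \<Longrightarrow> zpush (\<lambda>y. y) f = f"
proof
  fix y assume f: "finite (supp f)"
  have "zpush (\<lambda>y. y) f y = (\<Sum>x\<in>supp f. if x = y then f x else 0)" using zpush_sum[OF f order_refl] .
  also have "\<dots> = f y" using f by (simp add: sum.delta') (simp add: supp_def)
  finally show "zpush (\<lambda>y. y) f y = f y" .
qed

lemma zpush_ident:
  assumes "f \<in> zcarrier X n" "\<And>y. y \<in> sS X n \<Longrightarrow> \<phi>1 (\<psi>1 y) = \<phi>2 (\<psi>2 y)"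
  shows "zpush \<phi>1 (zpush \<psi>1 f) = zpush \<phi>2 (zpush \<psi>2 f)"
proof -
  have f: "finite (supp f)" using zfin assms(1) .
  have "zpush \<phi>1 (zpush \<psi>1 f) = zpush (\<lambda>y. \<phi>1 (\<psi>1 y)) f" using zpush_comp[OF f] .
  also have "\<dots> = zpush (\<lambda>y. \<phi>2 (\<psi>2 y)) f"
  proof (rule zpush_cong)
    fix y assume "f y \<noteq> 0"
    then have "y \<in> sS X n" using zsupp_in[OF assms(1)] by simp
    then show "\<phi>1 (\<psi>1 y) = \<phi>2 (\<psi>2 y)" by (rule assms(2))
  qed
  also have "\<dots> = zpush \<phi>2 (zpush \<psi>2 f)" by (rule zpush_comp[OF f, symmetric])
  finally show ?thesis .
qed

lemma ZZ_simplicial: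
  assumes X: "simplicial X"
  shows "simplicial (ZZ X)"
  unfolding simplicial_def ZZ_simps
proof (intro conjI allI impI)
  fix n i x assume a: "x \<in> zcarrier X (Suc n) \<and> i \<le> Suc n"
  show "zpush (sd X (Suc n) i) x \<in> zcarrier X n" using a zpush_zcarrier simp_d_closed[OF X] by blast
next
  fix n i x assume a: "x \<in> zcarrier X n \<and> i \<le> n"
  show "zpush (ss X n i) x \<in> zcarrier X (Suc n)" using a zpush_zcarrier simp_s_closed[OF X] by blast
next
  fix n i j x assume a: "x \<in> zcarrier X (Suc (Suc n)) \<and> i < j \<and> j \<le> Suc (Suc n)"
  show "zpush (sd X (Suc n) i) (zpush (sd X (Suc (Suc n)) j) x) = zpush (sd X (Suc n) (j - 1)) (zpush (sd X (Suc (Suc n)) i) x)"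
    by (rule zpush_ident[OF conjunct1[OF a]]) (use a simp_dd[OF X] in simp)
next
  fix n i j x assume a: "x \<in> zcarrier X (Suc n) \<and> i < j \<and> j \<le> Suc n"
  show "zpush (sd X (Suc (Suc n)) i) (zpush (ss X (Suc n) j) x) = zpush (ss X n (j - 1)) (zpush (sd X (Suc n) i) x)"
    by (rule zpush_ident[OF conjunct1[OF a]]) (use a simp_ds_lt[OF X] in simp)
next
  fix n j x assume a: "x \<in> zcarrier X n \<and> j \<le> n"
  have f: "finite (supp x)" using a zfin by blast
  have "zpush (sd X (Suc n) j) (zpush (ss X n j) x) = zpush (\<lambda>y. sd X (Suc n) j (ss X n j y)) x"
    using zpush_comp[OF f] .
  also have "\<dots> = zpush (\<lambda>y. y) x"
    by (rule zpush_cong) (use a zsupp_in[OF conjunct1[OF a]] simp_ds_eq[OF X] in simp)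
  also have "zpush (\<lambda>y. y) x = x" using zpush_id[OF f] .
  finally show "zpush (sd X (Suc n) j) (zpush (ss X n j) x) = x" .
next
  fix n j x assume a: "x \<in> zcarrier X n \<and> j \<le> n"
  have f: "finite (supp x)" using a zfin by blast
  have "zpush (sd X (Suc n) (Suc j)) (zpush (ss X n j) x) = zpush (\<lambda>y. sd X (Suc n) (Suc j) (ss X n j y)) x"
    using zpush_comp[OF f] .
  also have "\<dots> = zpush (\<lambda>y. y) x"
    by (rule zpush_cong) (use a zsupp_in[OF conjunct1[OF a]] simp_ds_suc[OF X] in simp)
  also have "zpush (\<lambda>y. y) x = x" using zpush_id[OF f] .
  finally show "zpush (sd X (Suc n) (Suc j)) (zpush (ss X n j) x) = x" .
next
  fix n i j x assume a: "x \<in> zcarrier X (Suc n) \<and> Suc j < i \<and> i \<le> Suc (Suc n)"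
  show "zpush (sd X (Suc (Suc n)) i) (zpush (ss X (Suc n) j) x) = zpush (ss X n j) (zpush (sd X (Suc n) (i - 1)) x)"
    by (rule zpush_ident[OF conjunct1[OF a]]) (use a simp_ds_gt[OF X] in simp)
next
  fix n i j x assume a: "x \<in> zcarrier X n \<and> i \<le> j \<and> j \<le> n"
  show "zpush (ss X (Suc n) i) (zpush (ss X n j) x) = zpush (ss X (Suc n) (Suc j)) (zpush (ss X n i) x)"
    by (rule zpush_ident[OF conjunct1[OF a]]) (use a simp_ss[OF X] in simp)
qed

lemma ZZ_sab:
  assumes X: "simplicial X"
  shows "sAbGrp (ZZ X)"
  unfolding sAbGrp_def
proof (intro conjI allI impI)
  show "simplicial (ZZ X)" using ZZ_simplicial[OF X] .
next
  fix n show "comm_group (sgrp (ZZ X) n)" using zgrp_cg by simp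
next
  fix n show "carrier (sgrp (ZZ X) n) = sS (ZZ X) n" by simp
next
  fix n i :: nat assume i: "i \<le> Suc n"
  have "zpush (sd X (Suc n) i) \<in> hom (zgrp X (Suc n)) (zgrp X n)"
    by (rule zpush_hom) (rule simp_d_closed[OF X _ i])
  then show "sd (ZZ X) (Suc n) i \<in> hom (sgrp (ZZ X) (Suc n)) (sgrp (ZZ X) n)" by simp
next
  fix n i :: nat assume i: "i \<le> n"
  have "zpush (ss X n i) \<in> hom (zgrp X n) (zgrp X (Suc n))"
    by (rule zpush_hom) (rule simp_s_closed[OF X _ i])
  then show "ss (ZZ X) n i \<in> hom (sgrp (ZZ X) n) (sgrp (ZZ X) (Suc n))" by simp
qed


lemma zgrp_grp: "group (zgrp X n)"
  using zgrp_cg comm_group_def by blast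

lemma horn_eta:
  assumes "horn X n k h"
  shows "horn (ZZ X) n k (\<lambda>i. etaZ (h i))"
  using assms zc_eta zpush_eta unfolding horn_def ZZ_simps by metis

locale stc =
  fixes X :: "'a stcx"
  assumes stc: "sTcomplex X"
begin

lemma smpX: "simplicial X" using stc unfolding sTcomplex_def by blast

lemma sabZ: "sabg (ZZ X)" using ZZ_sab[OF smpX] sabg.intro by blast

lemma thin_sub: "sthin X n \<subseteq> sS X n" using stc unfolding sTcomplex_def by blast
lemma thin0: "sthin X 0 = {}" using stc unfolding sTcomplex_def by blast
lemma uniqX: "horn X n k h \<Longrightarrow> \<exists>!x. filler X n k h x \<and> x \<in> sthin X (Suc n)"
  using stc unfolding sTcomplex_def by blast

lemma fillX: "horn X n k h \<Longrightarrow> filler X n k h (fill X n k h) \<and> fill X n k h \<in> sthin X (Suc n)"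
  unfolding fill_def by (rule theI'[OF uniqX])

lemma fillX_unique: "horn X n k h \<Longrightarrow> filler X n k h x \<Longrightarrow> x \<in> sthin X (Suc n) \<Longrightarrow> fill X n k h = x"
  using fillX uniqX by blast

abbreviation "FZ n k h \<equiv> fill (UsT (ZZ X)) n k (\<lambda>i. etaZ (h i))"

lemma FZ: "horn X n k h \<Longrightarrow> filler (ZZ X) n k (\<lambda>i. etaZ (h i)) (FZ n k h) \<and> FZ n k h \<in> thinS (ZZ X) (Suc n)"
  using sabg.fill_UsT[OF sabZ horn_eta] by blast

lemma FZ_zc: "horn X n k h \<Longrightarrow> FZ n k h \<in> zcarrier X (Suc n)"
  using FZ unfolding filler_def by simp

lemma relgen_zc: "(n, f) \<in> relgen X \<Longrightarrow> f \<in> zcarrier X n"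
proof (induction rule: relgen.induct)
  case (gen n k h)
  have a: "FZ n k h \<in> zcarrier X (Suc n)" using FZ_zc[OF gen] .
  have "fill X n k h \<in> sthin X (Suc n)" using fillX[OF gen] by blast
  then have "fill X n k h \<in> sS X (Suc n)" using thin_sub by blast
  then have b: "etaZ (fill X n k h) \<in> zcarrier X (Suc n)" by (rule zc_eta)
  have "(\<lambda>y. FZ n k h y + - etaZ (fill X n k h) y) \<in> zcarrier X (Suc n)"
    using zc_add[OF a zc_neg[OF b]] .
  then show ?case by simp
next
  case (zero n) then show ?case by (rule zc_zero)
next
  case (add n f g) show ?case by (rule zc_add[OF add.IH])
next
  case (neg n f) show ?case by (rule zc_neg[OF neg.IH])
next
  case (face n f i)
  have "f \<in> zcarrier X (Suc n)" using face.IH .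
  then show ?case
    by (rule zpush_zcarrier) (rule simp_d_closed[OF smpX _ face.hyps(2)], assumption)
next
  case (degen n f i)
  have "f \<in> zcarrier X n" using degen.IH .
  then show ?case
    by (rule zpush_zcarrier) (rule simp_s_closed[OF smpX _ degen.hyps(2)], assumption)
qed

lemma relN_zc: "relN X n \<subseteq> zcarrier X n"
proof
  fix f assume "f \<in> relN X n"
  then have "(n, f) \<in> relgen X" unfolding relN_def by simp
  then show "f \<in> zcarrier X n" by (rule relgen_zc)
qed

lemma relN_zc': "f \<in> relN X n \<Longrightarrow> f \<in> zcarrier X n"
  using relN_zc by (rule subsetD)

lemma relN_sub: "subgroup (relN X n) (zgrp X n)"
proof (rule subgroup.intro)
  show "relN X n \<subseteq> carrier (zgrp X n)" using relN_zc by simp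
next
  fix x y assume "x \<in> relN X n" "y \<in> relN X n"
  then have "(n, \<lambda>z. x z + y z) \<in> relgen X" unfolding relN_def by (intro relgen.add) simp_all
  then show "x \<otimes>\<^bsub>zgrp X n\<^esub> y \<in> relN X n" unfolding relN_def by simp
next
  have "(n, \<lambda>z. 0) \<in> relgen X" by (rule relgen.zero)
  then show "\<one>\<^bsub>zgrp X n\<^esub> \<in> relN X n" unfolding relN_def by simp
next
  fix x assume x: "x \<in> relN X n"
  then have "inv\<^bsub>zgrp X n\<^esub> x = (\<lambda>y. - x y)" by (intro zgrp_inv relN_zc')
  moreover have "(n, \<lambda>y. - x y) \<in> relgen X" using x unfolding relN_def by (intro relgen.neg) simp
  ultimately show "inv\<^bsub>zgrp X n\<^esub> x \<in> relN X n" unfolding relN_def by simp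
qed

lemma relN_normal: "relN X n \<lhd> zgrp X n"
  using comm_group.subgroup_imp_normal[OF zgrp_cg relN_sub] .

abbreviation "cls n f \<equiv> r_coset (zgrp X n) (relN X n) f"

lemma cls_mem: "f \<in> zcarrier X n \<Longrightarrow> f \<in> cls n f"
  by (rule group.rcos_self[OF zgrp_grp _ relN_sub]) simp

lemma cls_eqI: "b \<in> zcarrier X n \<Longrightarrow> (\<lambda>y. a y - b y) \<in> relN X n \<Longrightarrow> a \<in> zcarrier X n \<Longrightarrow> cls n a = cls n b"
proof -
  assume b: "b \<in> zcarrier X n" and ab: "(\<lambda>y. a y - b y) \<in> relN X n" and a: "a \<in> zcarrier X n"
  have Hc: "relN X n \<subseteq> carrier (zgrp X n)" using relN_zc by simp
  have bc: "b \<in> carrier (zgrp X n)" using b by simp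
  have "(\<lambda>y. a y - b y) \<otimes>\<^bsub>zgrp X n\<^esub> b \<in> cls n b"
    by (rule group.rcosI[OF zgrp_grp ab Hc bc])
  then have "a \<in> cls n b" by simp
  then have "cls n b = cls n a" by (rule group.repr_independence[OF zgrp_grp _ bc relN_sub])
  then show ?thesis by simp
qed

lemma cls_rep: "C \<in> rcosets\<^bsub>zgrp X n\<^esub> (relN X n) \<Longrightarrow> \<exists>b \<in> zcarrier X n. C = cls n b"
  unfolding RCOSETS_def by auto

lemma cls_in: "b \<in> zcarrier X n \<Longrightarrow> cls n b \<in> rcosets\<^bsub>zgrp X n\<^esub> (relN X n)"
  by (rule group.rcosetsI[OF zgrp_grp]) (use relN_zc in simp_all)

lemma cls_elem: "a \<in> cls n b \<Longrightarrow> \<exists>h \<in> relN X n. a = (\<lambda>y. h y + b y)"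
  unfolding r_coset_def by auto

lemma cls_map:
  assumes b: "b \<in> zcarrier X n" and a: "a \<in> cls n b"
    and hc: "\<And>x. x \<in> sS X n \<Longrightarrow> \<phi> x \<in> sS X m"
    and hr: "\<And>f. f \<in> relN X n \<Longrightarrow> zpush \<phi> f \<in> relN X m"
  shows "cls m (zpush \<phi> a) = cls m (zpush \<phi> b)"
proof -
  obtain h where h: "h \<in> relN X n" "a = (\<lambda>y. h y + b y)" using cls_elem[OF a] by blast
  have hz: "h \<in> zcarrier X n" using h relN_zc by blast
  have "zpush \<phi> a = (\<lambda>y. zpush \<phi> h y + zpush \<phi> b y)"
    unfolding h(2) by (rule zpush_add[OF zfin[OF hz] zfin[OF b]])
  then have za: "zpush \<phi> a = zpush \<phi> h \<otimes>\<^bsub>zgrp X m\<^esub> zpush \<phi> b" by simp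
  moreover have "zpush \<phi> b \<in> zcarrier X m" using zpush_zcarrier[OF b hc] .
  moreover have "zpush \<phi> h \<in> relN X m" using hr h by blast
  moreover have Hc: "relN X m \<subseteq> carrier (zgrp X m)" using relN_zc by simp
  ultimately have "zpush \<phi> h \<otimes>\<^bsub>zgrp X m\<^esub> zpush \<phi> b \<in> cls m (zpush \<phi> b)"
    using group.rcosI[OF zgrp_grp] by simp
  then have "zpush \<phi> a \<in> cls m (zpush \<phi> b)" using za by simp
  moreover have "zpush \<phi> b \<in> carrier (zgrp X m)" using \<open>zpush \<phi> b \<in> zcarrier X m\<close> by simp
  ultimately have "cls m (zpush \<phi> b) = cls m (zpush \<phi> a)"
    using group.repr_independence[OF zgrp_grp _ _ relN_sub] by blast
  then show ?thesis by simp
qed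

lemma AbST_simps[simp]:
  "sS (AbST X) n = rcosets\<^bsub>zgrp X n\<^esub> (relN X n)"
  "sgrp (AbST X) n = zgrp X n Mod relN X n"
  by (simp_all add: AbST_def)

lemma sd_cls:
  assumes b: "b \<in> zcarrier X (Suc n)" and i: "i \<le> Suc n"
  shows "sd (AbST X) (Suc n) i (cls (Suc n) b) = cls n (zpush (sd X (Suc n) i) b)"
proof -
  have ex: "\<exists>f. f \<in> cls (Suc n) b" using cls_mem[OF b] by blast
  have s: "(SOME f. f \<in> cls (Suc n) b) \<in> cls (Suc n) b" using someI_ex[OF ex] .
  have "sd (AbST X) (Suc n) i (cls (Suc n) b) = cls n (zpush (sd X (Suc n) i) (SOME f. f \<in> cls (Suc n) b))"
    by (simp add: AbST_def)
  also have "\<dots> = cls n (zpush (sd X (Suc n) i) b)"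
  proof (rule cls_map[OF b s])
    fix x assume "x \<in> sS X (Suc n)" then show "sd X (Suc n) i x \<in> sS X n" using simp_d_closed[OF smpX _ i] by blast
  next
    fix f assume "f \<in> relN X (Suc n)" then show "zpush (sd X (Suc n) i) f \<in> relN X n"
      unfolding relN_def using relgen.face i by blast
  qed
  finally show ?thesis .
qed

lemma ss_cls:
  assumes b: "b \<in> zcarrier X n" and i: "i \<le> n"
  shows "ss (AbST X) n i (cls n b) = cls (Suc n) (zpush (ss X n i) b)"
proof -
  have ex: "\<exists>f. f \<in> cls n b" using cls_mem[OF b] by blast
  have s: "(SOME f. f \<in> cls n b) \<in> cls n b" using someI_ex[OF ex] .
  have "ss (AbST X) n i (cls n b) = cls (Suc n) (zpush (ss X n i) (SOME f. f \<in> cls n b))"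
    by (simp add: AbST_def)
  also have "\<dots> = cls (Suc n) (zpush (ss X n i) b)"
  proof (rule cls_map[OF b s])
    fix x assume "x \<in> sS X n" then show "ss X n i x \<in> sS X (Suc n)" using simp_s_closed[OF smpX _ i] by blast
  next
    fix f assume "f \<in> relN X n" then show "zpush (ss X n i) f \<in> relN X (Suc n)"
      unfolding relN_def using relgen.degen i by blast
  qed
  finally show ?thesis .
qed

lemma cls_mult: "a \<in> zcarrier X n \<Longrightarrow> b \<in> zcarrier X n \<Longrightarrow>
   cls n a \<otimes>\<^bsub>zgrp X n Mod relN X n\<^esub> cls n b = cls n (\<lambda>y. a y + b y)"
  using normal.rcos_sum[OF relN_normal] by simp

lemma Q_cg: "comm_group (zgrp X n Mod relN X n)"
  using comm_group.abelian_FactGroup[OF zgrp_cg relN_sub] .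

lemma Q_carrier: "carrier (zgrp X n Mod relN X n) = rcosets\<^bsub>zgrp X n\<^esub> (relN X n)"
  by (simp add: FactGroup_def)

end


context stc
begin

lemma zd_zc: "b \<in> zcarrier X (Suc n) \<Longrightarrow> i \<le> Suc n \<Longrightarrow> zpush (sd X (Suc n) i) b \<in> zcarrier X n"
proof -
  assume b: "b \<in> zcarrier X (Suc n)" and i: "i \<le> Suc n"
  show ?thesis by (rule zpush_zcarrier[OF b]) (erule simp_d_closed[OF smpX _ i])
qed

lemma zs_zc: "b \<in> zcarrier X n \<Longrightarrow> i \<le> n \<Longrightarrow> zpush (ss X n i) b \<in> zcarrier X (Suc n)"
proof -
  assume b: "b \<in> zcarrier X n" and i: "i \<le> n"
  show ?thesis by (rule zpush_zcarrier[OF b]) (erule simp_s_closed[OF smpX _ i])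
qed

lemma ZZs: "simplicial (ZZ X)" using ZZ_simplicial[OF smpX] .

lemma Zdd: "x \<in> zcarrier X (Suc (Suc n)) \<Longrightarrow> i < j \<Longrightarrow> j \<le> Suc (Suc n) \<Longrightarrow>
    zpush (sd X (Suc n) i) (zpush (sd X (Suc (Suc n)) j) x) = zpush (sd X (Suc n) (j - 1)) (zpush (sd X (Suc (Suc n)) i) x)"
  using simp_dd[OF ZZs] by simp
lemma Zds_lt: "x \<in> zcarrier X (Suc n) \<Longrightarrow> i < j \<Longrightarrow> j \<le> Suc n \<Longrightarrow>
    zpush (sd X (Suc (Suc n)) i) (zpush (ss X (Suc n) j) x) = zpush (ss X n (j - 1)) (zpush (sd X (Suc n) i) x)"
  using simp_ds_lt[OF ZZs] by simp
lemma Zds_eq: "x \<in> zcarrier X n \<Longrightarrow> j \<le> n \<Longrightarrow> zpush (sd X (Suc n) j) (zpush (ss X n j) x) = x"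
  using simp_ds_eq[OF ZZs] by simp
lemma Zds_suc: "x \<in> zcarrier X n \<Longrightarrow> j \<le> n \<Longrightarrow> zpush (sd X (Suc n) (Suc j)) (zpush (ss X n j) x) = x"
  using simp_ds_suc[OF ZZs] by simp
lemma Zds_gt: "x \<in> zcarrier X (Suc n) \<Longrightarrow> Suc j < i \<Longrightarrow> i \<le> Suc (Suc n) \<Longrightarrow>
    zpush (sd X (Suc (Suc n)) i) (zpush (ss X (Suc n) j) x) = zpush (ss X n j) (zpush (sd X (Suc n) (i - 1)) x)"
  using simp_ds_gt[OF ZZs] by simp
lemma Zss: "x \<in> zcarrier X n \<Longrightarrow> i \<le> j \<Longrightarrow> j \<le> n \<Longrightarrow>
    zpush (ss X (Suc n) i) (zpush (ss X n j) x) = zpush (ss X (Suc n) (Suc j)) (zpush (ss X n i) x)"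
  using simp_ss[OF ZZs] by simp

lemma AbST_simplicial: "simplicial (AbST X)"
  unfolding simplicial_def AbST_simps
proof (intro conjI allI impI)
  fix n i C assume a: "C \<in> rcosets\<^bsub>zgrp X (Suc n)\<^esub> relN X (Suc n) \<and> i \<le> Suc n"
  then obtain b where b: "b \<in> zcarrier X (Suc n)" "C = cls (Suc n) b" using cls_rep by blast
  show "sd (AbST X) (Suc n) i C \<in> rcosets\<^bsub>zgrp X n\<^esub> relN X n"
    using b a sd_cls cls_in zd_zc by simp
next
  fix n i C assume a: "C \<in> rcosets\<^bsub>zgrp X n\<^esub> relN X n \<and> i \<le> n"
  then obtain b where b: "b \<in> zcarrier X n" "C = cls n b" using cls_rep by blast
  show "ss (AbST X) n i C \<in> rcosets\<^bsub>zgrp X (Suc n)\<^esub> relN X (Suc n)"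
    using b a ss_cls cls_in zs_zc by simp
next
  fix n i j C assume a: "C \<in> rcosets\<^bsub>zgrp X (Suc (Suc n))\<^esub> relN X (Suc (Suc n)) \<and> i < j \<and> j \<le> Suc (Suc n)"
  then obtain b where b: "b \<in> zcarrier X (Suc (Suc n))" "C = cls (Suc (Suc n)) b" using cls_rep by blast
  have i: "i \<le> Suc (Suc n)" "j - 1 \<le> Suc n" using a by auto
  show "sd (AbST X) (Suc n) i (sd (AbST X) (Suc (Suc n)) j C) = sd (AbST X) (Suc n) (j - 1) (sd (AbST X) (Suc (Suc n)) i C)"
    using b a i sd_cls zd_zc Zdd by simp
next
  fix n i j C assume a: "C \<in> rcosets\<^bsub>zgrp X (Suc n)\<^esub> relN X (Suc n) \<and> i < j \<and> j \<le> Suc n"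
  then obtain b where b: "b \<in> zcarrier X (Suc n)" "C = cls (Suc n) b" using cls_rep by blast
  have i: "i \<le> Suc n" "i \<le> Suc (Suc n)" "j - 1 \<le> n" using a by auto
  show "sd (AbST X) (Suc (Suc n)) i (ss (AbST X) (Suc n) j C) = ss (AbST X) n (j - 1) (sd (AbST X) (Suc n) i C)"
    using b a i sd_cls ss_cls zd_zc zs_zc Zds_lt by simp
next
  fix n j C assume a: "C \<in> rcosets\<^bsub>zgrp X n\<^esub> relN X n \<and> j \<le> n"
  then obtain b where b: "b \<in> zcarrier X n" "C = cls n b" using cls_rep by blast
  show "sd (AbST X) (Suc n) j (ss (AbST X) n j C) = C"
    using b a sd_cls ss_cls zd_zc zs_zc Zds_eq by simp
next
  fix n j C assume a: "C \<in> rcosets\<^bsub>zgrp X n\<^esub> relN X n \<and> j \<le> n"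
  then obtain b where b: "b \<in> zcarrier X n" "C = cls n b" using cls_rep by blast
  show "sd (AbST X) (Suc n) (Suc j) (ss (AbST X) n j C) = C"
    using b a sd_cls ss_cls zd_zc zs_zc Zds_suc by simp
next
  fix n i j C assume a: "C \<in> rcosets\<^bsub>zgrp X (Suc n)\<^esub> relN X (Suc n) \<and> Suc j < i \<and> i \<le> Suc (Suc n)"
  then obtain b where b: "b \<in> zcarrier X (Suc n)" "C = cls (Suc n) b" using cls_rep by blast
  have i: "i - 1 \<le> Suc n" "j \<le> n" "j \<le> Suc n" using a by auto
  show "sd (AbST X) (Suc (Suc n)) i (ss (AbST X) (Suc n) j C) = ss (AbST X) n j (sd (AbST X) (Suc n) (i - 1) C)"
    using b a i sd_cls ss_cls zd_zc zs_zc Zds_gt by simp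
next
  fix n i j C assume a: "C \<in> rcosets\<^bsub>zgrp X n\<^esub> relN X n \<and> i \<le> j \<and> j \<le> n"
  then obtain b where b: "b \<in> zcarrier X n" "C = cls n b" using cls_rep by blast
  have i: "i \<le> n" "Suc j \<le> Suc n" "i \<le> Suc n" using a by auto
  show "ss (AbST X) (Suc n) i (ss (AbST X) n j C) = ss (AbST X) (Suc n) (Suc j) (ss (AbST X) n i C)"
    using b a i ss_cls zs_zc Zss by simp
qed

end


context stc
begin

lemma cls_hom:
  assumes F: "\<And>b. b \<in> zcarrier X n \<Longrightarrow> F (cls n b) = cls m (zpush \<phi> b)"
      and c: "\<And>x. x \<in> sS X n \<Longrightarrow> \<phi> x \<in> sS X m"
  shows "F \<in> hom (zgrp X n Mod relN X n) (zgrp X m Mod relN X m)"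
  unfolding hom_def
proof (intro CollectI conjI ballI funcsetI)
  fix C assume "C \<in> carrier (zgrp X n Mod relN X n)"
  then obtain b where b: "b \<in> zcarrier X n" "C = cls n b" using cls_rep Q_carrier by metis
  have "zpush \<phi> b \<in> zcarrier X m" using zpush_zcarrier[OF b(1) c] .
  then show "F C \<in> carrier (zgrp X m Mod relN X m)" using F b cls_in Q_carrier by simp
next
  fix C D assume "C \<in> carrier (zgrp X n Mod relN X n)" "D \<in> carrier (zgrp X n Mod relN X n)"
  then obtain b d where b: "b \<in> zcarrier X n" "C = cls n b" and d: "d \<in> zcarrier X n" "D = cls n d"
    using cls_rep Q_carrier by metis
  have zb: "zpush \<phi> b \<in> zcarrier X m" using zpush_zcarrier[OF b(1) c] .
  have zd: "zpush \<phi> d \<in> zcarrier X m" using zpush_zcarrier[OF d(1) c] .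
  have bd: "(\<lambda>y. b y + d y) \<in> zcarrier X n" using zc_add[OF b(1) d(1)] .
  have "F (C \<otimes>\<^bsub>zgrp X n Mod relN X n\<^esub> D) = F (cls n (\<lambda>y. b y + d y))"
    using cls_mult[OF b(1) d(1)] b d by simp
  also have "\<dots> = cls m (zpush \<phi> (\<lambda>y. b y + d y))" using F[OF bd] .
  also have "zpush \<phi> (\<lambda>y. b y + d y) = (\<lambda>y. zpush \<phi> b y + zpush \<phi> d y)"
    by (rule zpush_add[OF zfin[OF b(1)] zfin[OF d(1)]])
  also have "cls m (\<lambda>y. zpush \<phi> b y + zpush \<phi> d y) = cls m (zpush \<phi> b) \<otimes>\<^bsub>zgrp X m Mod relN X m\<^esub> cls m (zpush \<phi> d)"
    using cls_mult[OF zb zd] by simp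
  also have "\<dots> = F C \<otimes>\<^bsub>zgrp X m Mod relN X m\<^esub> F D" using F b d by simp
  finally show "F (C \<otimes>\<^bsub>zgrp X n Mod relN X n\<^esub> D) = F C \<otimes>\<^bsub>zgrp X m Mod relN X m\<^esub> F D" .
qed

lemma AbST_sab: "sAbGrp (AbST X)"
  unfolding sAbGrp_def
proof (intro conjI allI impI)
  show "simplicial (AbST X)" by (rule AbST_simplicial)
next
  fix n show "comm_group (sgrp (AbST X) n)" using Q_cg by simp
next
  fix n show "carrier (sgrp (AbST X) n) = sS (AbST X) n" using Q_carrier by simp
next
  fix n i :: nat assume i: "i \<le> Suc n"
  have "sd (AbST X) (Suc n) i \<in> hom (zgrp X (Suc n) Mod relN X (Suc n)) (zgrp X n Mod relN X n)"
  proof (rule cls_hom)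
    fix b assume "b \<in> zcarrier X (Suc n)"
    then show "sd (AbST X) (Suc n) i (cls (Suc n) b) = cls n (zpush (sd X (Suc n) i) b)" using sd_cls i by simp
  next
    fix x assume "x \<in> sS X (Suc n)" then show "sd X (Suc n) i x \<in> sS X n" using simp_d_closed[OF smpX _ i] by simp
  qed
  then show "sd (AbST X) (Suc n) i \<in> hom (sgrp (AbST X) (Suc n)) (sgrp (AbST X) n)" by simp
next
  fix n i :: nat assume i: "i \<le> n"
  have "ss (AbST X) n i \<in> hom (zgrp X n Mod relN X n) (zgrp X (Suc n) Mod relN X (Suc n))"
  proof (rule cls_hom)
    fix b assume "b \<in> zcarrier X n"
    then show "ss (AbST X) n i (cls n b) = cls (Suc n) (zpush (ss X n i) b)" using ss_cls i by simp
  next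
    fix x assume "x \<in> sS X n" then show "ss X n i x \<in> sS X (Suc n)" using simp_s_closed[OF smpX _ i] by simp
  qed
  then show "ss (AbST X) n i \<in> hom (sgrp (AbST X) n) (sgrp (AbST X) (Suc n))" by simp
qed

lemma AbST_sabg: "sabg (AbST X)" using AbST_sab sabg.intro by blast

lemma cls_zero: "cls n (\<lambda>x. 0) = relN X n"
proof -
  have "(\<lambda>x. 0) \<in> relN X n" unfolding relN_def using relgen.zero by simp
  then show ?thesis using subgroup.rcos_const[OF relN_sub zgrp_grp] by blast
qed

lemma cls_thin:
  assumes c: "c \<in> thinS (ZZ X) (Suc n)"
  shows "cls (Suc n) c \<in> thinS (AbST X) (Suc n)"
proof -
  obtain xs where xs: "set xs \<subseteq> {y. degenerate (ZZ X) (Suc n) y}"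
     "c = foldr (\<lambda>a b. a \<otimes>\<^bsub>zgrp X (Suc n)\<^esub> b) xs \<one>\<^bsub>zgrp X (Suc n)\<^esub>"
    using c unfolding thinS_def ZZ_simps by blast
  have "set xs \<subseteq> {y. degenerate (ZZ X) (Suc n) y} \<Longrightarrow>
     foldr (\<lambda>a b. a \<otimes>\<^bsub>zgrp X (Suc n)\<^esub> b) xs \<one>\<^bsub>zgrp X (Suc n)\<^esub> \<in> zcarrier X (Suc n) \<and>
     cls (Suc n) (foldr (\<lambda>a b. a \<otimes>\<^bsub>zgrp X (Suc n)\<^esub> b) xs \<one>\<^bsub>zgrp X (Suc n)\<^esub>) \<in> thinS (AbST X) (Suc n)"
  proof (induction xs)
    case Nil
    have "\<one>\<^bsub>sgrp (AbST X) (Suc n)\<^esub> \<in> thinS (AbST X) (Suc n)" by (rule sabg.thin_one[OF AbST_sabg])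
    then show ?case using cls_zero zc_zero by simp
  next
    case (Cons a xs)
    then have da: "degenerate (ZZ X) (Suc n) a" and IH: "foldr (\<lambda>a b. a \<otimes>\<^bsub>zgrp X (Suc n)\<^esub> b) xs \<one>\<^bsub>zgrp X (Suc n)\<^esub> \<in> zcarrier X (Suc n)"
       "cls (Suc n) (foldr (\<lambda>a b. a \<otimes>\<^bsub>zgrp X (Suc n)\<^esub> b) xs \<one>\<^bsub>zgrp X (Suc n)\<^esub>) \<in> thinS (AbST X) (Suc n)"
      by auto
    obtain y i where yi: "y \<in> zcarrier X n" "i \<le> n" "a = zpush (ss X n i) y"
      using da unfolding degenerate_def ZZ_simps by auto
    have az: "a \<in> zcarrier X (Suc n)" using zs_zc yi by simp
    let ?r = "foldr (\<lambda>a b. a \<otimes>\<^bsub>zgrp X (Suc n)\<^esub> b) xs \<one>\<^bsub>zgrp X (Suc n)\<^esub>"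
    have "cls (Suc n) a = ss (AbST X) n i (cls n y)" using ss_cls yi by simp
    moreover have "cls n y \<in> sS (AbST X) n" using cls_in yi by simp
    ultimately have ta: "cls (Suc n) a \<in> thinS (AbST X) (Suc n)"
      using sabg.thin_degen[OF AbST_sabg, of "cls n y" n i] yi by simp
    have "cls (Suc n) (a \<otimes>\<^bsub>zgrp X (Suc n)\<^esub> ?r) = cls (Suc n) a \<otimes>\<^bsub>sgrp (AbST X) (Suc n)\<^esub> cls (Suc n) ?r"
      using cls_mult[OF az IH(1)] by simp
    moreover have "cls (Suc n) a \<otimes>\<^bsub>sgrp (AbST X) (Suc n)\<^esub> cls (Suc n) ?r \<in> thinS (AbST X) (Suc n)"
      by (rule sabg.thin_mult[OF AbST_sabg ta IH(2)])
    moreover have "a \<otimes>\<^bsub>zgrp X (Suc n)\<^esub> ?r \<in> zcarrier X (Suc n)" using zc_add[OF az IH(1)] by simp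
    ultimately show ?case by simp
  qed
  then show ?thesis using xs by simp
qed

lemma unitAb_T: "sTmap X (UsT (AbST X)) (unitAb X)"
  unfolding sTmap_def ssmap_def UsT_simps
proof (intro conjI allI impI)
  fix n x assume "x \<in> sS X n"
  then have "etaZ x \<in> zcarrier X n" by (rule zc_eta)
  then show "unitAb X n x \<in> sS (AbST X) n" unfolding unitAb_def AbST_simps by (rule cls_in)
next
  fix n i x assume a: "x \<in> sS X (Suc n) \<and> i \<le> Suc n"
  have "sd (AbST X) (Suc n) i (cls (Suc n) (etaZ x)) = cls n (zpush (sd X (Suc n) i) (etaZ x))"
    using a by (intro sd_cls zc_eta) simp_all
  then show "unitAb X n (sd X (Suc n) i x) = sd (AbST X) (Suc n) i (unitAb X (Suc n) x)"
    unfolding unitAb_def zpush_eta by simp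
next
  fix n i x assume a: "x \<in> sS X n \<and> i \<le> n"
  have "ss (AbST X) n i (cls n (etaZ x)) = cls (Suc n) (zpush (ss X n i) (etaZ x))"
    using a by (intro ss_cls zc_eta) simp_all
  then show "unitAb X (Suc n) (ss X n i x) = ss (AbST X) n i (unitAb X n x)"
    unfolding unitAb_def zpush_eta by simp
next
  fix n x assume xt: "x \<in> sthin X n"
  then obtain m where m: "n = Suc m" using thin0 by (cases n) auto
  have xt': "x \<in> sthin X (Suc m)" using xt m by simp
  have xS: "x \<in> sS X (Suc m)" using xt' thin_sub by blast
  define h where "h = (\<lambda>i. sd X (Suc m) i x)"
  have hn: "horn X m 0 h" unfolding horn_def
  proof (intro conjI allI impI)
    fix i assume "i \<le> Suc m" "i \<noteq> 0" then show "h i \<in> sS X m"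
      unfolding h_def using simp_d_closed[OF smpX xS] by simp
  next
    fix i j assume a: "0 < m \<and> i < j \<and> j \<le> Suc m \<and> i \<noteq> 0 \<and> j \<noteq> 0"
    then obtain m' where m': "m = Suc m'" by (cases m) auto
    show "sd X m i (h j) = sd X m (j - 1) (h i)"
      unfolding h_def using simp_dd[OF smpX, of x m' i j] xS a m' by simp
  qed simp
  have fl: "filler X m 0 h x" unfolding filler_def h_def using xS by simp
  have fx: "fill X m 0 h = x" using fillX_unique[OF hn fl xt'] .
  have "(Suc m, \<lambda>y. FZ m 0 h y - etaZ (fill X m 0 h) y) \<in> relgen X" by (rule relgen.gen[OF hn])
  then have "(Suc m, \<lambda>y. - (FZ m 0 h y - etaZ x y)) \<in> relgen X" using fx relgen.neg by fastforce
  moreover have "(\<lambda>y. - (FZ m 0 h y - etaZ x y)) = (\<lambda>y. etaZ x y - FZ m 0 h y)" by auto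
  ultimately have r: "(\<lambda>y. etaZ x y - FZ m 0 h y) \<in> relN X (Suc m)" unfolding relN_def by simp
  have "cls (Suc m) (etaZ x) = cls (Suc m) (FZ m 0 h)"
    using cls_eqI[OF FZ_zc[OF hn] r zc_eta[OF xS]] .
  moreover have "cls (Suc m) (FZ m 0 h) \<in> thinS (AbST X) (Suc m)"
    using cls_thin FZ[OF hn] by blast
  ultimately show "unitAb X n x \<in> sthin (UsT (AbST X)) n"
    unfolding unitAb_def m sthin_UsT_Suc by simp
qed

end


lemma zc_induct_aux:
  assumes P0: "P (\<lambda>x. 0)"
  and Pp: "\<And>c x. c \<in> zcarrier X n \<Longrightarrow> x \<in> sS X n \<Longrightarrow> P c \<Longrightarrow> P (\<lambda>y. c y + etaZ x y)"
  and Pm: "\<And>c x. c \<in> zcarrier X n \<Longrightarrow> x \<in> sS X n \<Longrightarrow> P c \<Longrightarrow> P (\<lambda>y. c y + - etaZ x y)"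
  and S: "finite S"
  shows "\<And>c. c \<in> zcarrier X n \<Longrightarrow> supp c \<subseteq> S \<Longrightarrow> (\<Sum>x\<in>S. \<bar>c x\<bar>) = int k \<Longrightarrow> P c"
proof (induction k)
  case 0
  then have "\<forall>x\<in>S. c x = 0" using S by (simp add: sum_nonneg_eq_0_iff)
  then have "c = (\<lambda>x. 0)" using 0 unfolding supp_def by auto
  then show ?case using P0 by simp
next
  case (Suc k)
  have "\<exists>x\<in>S. c x \<noteq> 0"
  proof (rule ccontr)
    assume "\<not> ?thesis"
    then have "(\<Sum>x\<in>S. \<bar>c x\<bar>) = 0" by simp
    then show False using Suc.prems by simp
  qed
  then obtain x where x: "x \<in> S" "c x \<noteq> 0" by blast
  have xS: "x \<in> sS X n" by (rule zsupp_in[OF Suc.prems(1) x(2)])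
  have ex: "etaZ x \<in> zcarrier X n" using zc_eta[OF xS] .
  have sumx: "(\<Sum>y\<in>S. \<bar>g y\<bar>) = \<bar>g x\<bar> + (\<Sum>y\<in>S - {x}. \<bar>g y\<bar>)" for g :: "'a \<Rightarrow> int"
    using S x(1) by (simp add: sum.remove)
  show ?case
  proof (cases "c x > 0")
    case True
    define c' where "c' = (\<lambda>y. c y + - etaZ x y)"
    have c'z: "c' \<in> zcarrier X n" unfolding c'_def using zc_add[OF Suc.prems(1) zc_neg[OF ex]] .
    have c's: "supp c' \<subseteq> S" using Suc.prems(2) x(1) unfolding c'_def supp_def etaZ_def by auto
    have "(\<Sum>y\<in>S - {x}. \<bar>c' y\<bar>) = (\<Sum>y\<in>S - {x}. \<bar>c y\<bar>)"
      by (rule sum.cong) (auto simp: c'_def etaZ_def)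
    moreover have "\<bar>c' x\<bar> = \<bar>c x\<bar> - 1" using True by (simp add: c'_def etaZ_def)
    ultimately have "(\<Sum>y\<in>S. \<bar>c' y\<bar>) = int k" using sumx[of c'] sumx[of c] Suc.prems(3) by simp
    then have "P c'" using Suc.IH c'z c's by blast
    then have "P (\<lambda>y. c' y + etaZ x y)" using Pp[OF c'z xS] by blast
    moreover have "(\<lambda>y. c' y + etaZ x y) = c" unfolding c'_def by simp
    ultimately show ?thesis by simp
  next
    case False
    then have neg: "c x < 0" using x(2) by simp
    define c' where "c' = (\<lambda>y. c y + etaZ x y)"
    have c'z: "c' \<in> zcarrier X n" unfolding c'_def using zc_add[OF Suc.prems(1) ex] .
    have c's: "supp c' \<subseteq> S" using Suc.prems(2) x(1) unfolding c'_def supp_def etaZ_def by auto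
    have "(\<Sum>y\<in>S - {x}. \<bar>c' y\<bar>) = (\<Sum>y\<in>S - {x}. \<bar>c y\<bar>)"
      by (rule sum.cong) (auto simp: c'_def etaZ_def)
    moreover have "\<bar>c' x\<bar> = \<bar>c x\<bar> - 1" using neg by (simp add: c'_def etaZ_def)
    ultimately have "(\<Sum>y\<in>S. \<bar>c' y\<bar>) = int k" using sumx[of c'] sumx[of c] Suc.prems(3) by simp
    then have "P c'" using Suc.IH c'z c's by blast
    then have "P (\<lambda>y. c' y + - etaZ x y)" using Pm[OF c'z xS] by blast
    moreover have "(\<lambda>y. c' y + - etaZ x y) = c" unfolding c'_def by simp
    ultimately show ?thesis by simp
  qed
qed

lemma zc_induct:
  assumes c: "c \<in> zcarrier X n"
  and P0: "P (\<lambda>x. 0)"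
  and Pp: "\<And>c x. c \<in> zcarrier X n \<Longrightarrow> x \<in> sS X n \<Longrightarrow> P c \<Longrightarrow> P (\<lambda>y. c y + etaZ x y)"
  and Pm: "\<And>c x. c \<in> zcarrier X n \<Longrightarrow> x \<in> sS X n \<Longrightarrow> P c \<Longrightarrow> P (\<lambda>y. c y + - etaZ x y)"
  shows "P c"
proof -
  have f: "finite (supp c)" using zfin[OF c] .
  have "(\<Sum>x\<in>supp c. \<bar>c x\<bar>) = int (nat (\<Sum>x\<in>supp c. \<bar>c x\<bar>))" by (simp add: sum_nonneg)
  then show ?thesis using zc_induct_aux[OF P0 Pp Pm f c order_refl] by blast
qed


locale univ = stc X + A: sabg A for X :: "'a stcx" and A :: "'b sab" +
  fixes f :: "nat \<Rightarrow> 'a \<Rightarrow> 'b"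
  assumes fT: "sTmap X (UsT A) f"
begin

lemma f_closed: "x \<in> sS X n \<Longrightarrow> f n x \<in> sS A n"
  using fT unfolding sTmap_def ssmap_def UsT_simps by blast

lemma f_d: "x \<in> sS X (Suc n) \<Longrightarrow> i \<le> Suc n \<Longrightarrow> f n (sd X (Suc n) i x) = sd A (Suc n) i (f (Suc n) x)"
  using fT unfolding sTmap_def ssmap_def UsT_simps by blast

lemma f_s: "x \<in> sS X n \<Longrightarrow> i \<le> n \<Longrightarrow> f (Suc n) (ss X n i x) = ss A n i (f n x)"
  using fT unfolding sTmap_def ssmap_def UsT_simps by blast

lemma f_thin: "x \<in> sthin X (Suc n) \<Longrightarrow> f (Suc n) x \<in> thinS A (Suc n)"
proof -
  assume x: "x \<in> sthin X (Suc n)"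
  have "f (Suc n) x \<in> sthin (UsT A) (Suc n)" using fT x unfolding sTmap_def by blast
  then show ?thesis by (simp add: sthin_UsT_Suc)
qed

definition F :: "nat \<Rightarrow> ('a \<Rightarrow> int) \<Rightarrow> 'b" where
  "F n c = finprod (sgrp A n) (\<lambda>x. f n x [^]\<^bsub>sgrp A n\<^esub> c x) (supp c)"

lemma F_over:
  assumes c: "c \<in> zcarrier X n" and S: "finite S" "supp c \<subseteq> S" "S \<subseteq> sS X n"
  shows "F n c = finprod (sgrp A n) (\<lambda>x. f n x [^]\<^bsub>sgrp A n\<^esub> c x) S"
proof -
  interpret G: comm_group "sgrp A n" by (rule A.cg)
  show ?thesis unfolding F_def
  proof (rule G.finprod_mono_neutral_cong_left[OF S(1) S(2)])
    fix i assume "i \<in> S - supp c"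
    then have "c i = 0" unfolding supp_def by simp
    then show "f n i [^]\<^bsub>sgrp A n\<^esub> c i = \<one>\<^bsub>sgrp A n\<^esub>" by simp
  next
    show "(\<lambda>x. f n x [^]\<^bsub>sgrp A n\<^esub> c x) \<in> S \<rightarrow> carrier (sgrp A n)"
      using S(3) f_closed A.carr by (intro funcsetI G.int_pow_closed) auto
  qed simp
qed

lemma F_closed: "c \<in> zcarrier X n \<Longrightarrow> F n c \<in> sS A n"
proof -
  interpret G: comm_group "sgrp A n" by (rule A.cg)
  assume c: "c \<in> zcarrier X n"
  have "(\<lambda>x. f n x [^]\<^bsub>sgrp A n\<^esub> c x) \<in> supp c \<rightarrow> carrier (sgrp A n)"
  proof (rule funcsetI)
    fix x assume "x \<in> supp c"
    then have "c x \<noteq> 0" by (simp add: supp_def)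
    then have "x \<in> sS X n" by (rule zsupp_in[OF c])
    then have "f n x \<in> carrier (sgrp A n)" using f_closed A.carr by simp
    then show "f n x [^]\<^bsub>sgrp A n\<^esub> c x \<in> carrier (sgrp A n)" by (rule G.int_pow_closed)
  qed
  then have "F n c \<in> carrier (sgrp A n)" unfolding F_def by (rule G.finprod_closed)
  then show ?thesis using A.carr by simp
qed

lemma F_add:
  assumes a: "a \<in> zcarrier X n" and b: "b \<in> zcarrier X n"
  shows "F n (\<lambda>y. a y + b y) = F n a \<otimes>\<^bsub>sgrp A n\<^esub> F n b"
proof -
  interpret G: comm_group "sgrp A n" by (rule A.cg)
  let ?S = "supp a \<union> supp b"
  have fS: "finite ?S" using zfin[OF a] zfin[OF b] by simp
  have sub: "?S \<subseteq> sS X n" using a b unfolding zcarrier_iff by auto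
  have ab: "(\<lambda>y. a y + b y) \<in> zcarrier X n" using zc_add[OF a b] .
  have s1: "supp (\<lambda>y. a y + b y) \<subseteq> ?S" unfolding supp_def by auto
  have pi: "(\<lambda>x. f n x [^]\<^bsub>sgrp A n\<^esub> g x) \<in> ?S \<rightarrow> carrier (sgrp A n)" for g :: "'a \<Rightarrow> int"
    using sub f_closed A.carr by (intro funcsetI G.int_pow_closed) auto
  have "F n (\<lambda>y. a y + b y) = finprod (sgrp A n) (\<lambda>x. f n x [^]\<^bsub>sgrp A n\<^esub> (a x + b x)) ?S"
    using F_over[OF ab fS s1 sub] by simp
  also have "\<dots> = finprod (sgrp A n) (\<lambda>x. f n x [^]\<^bsub>sgrp A n\<^esub> a x \<otimes>\<^bsub>sgrp A n\<^esub> f n x [^]\<^bsub>sgrp A n\<^esub> b x) ?S"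
  proof (rule G.finprod_cong')
    fix x assume "x \<in> ?S"
    then have "f n x \<in> carrier (sgrp A n)" using sub f_closed A.carr by auto
    then show "f n x [^]\<^bsub>sgrp A n\<^esub> (a x + b x) = f n x [^]\<^bsub>sgrp A n\<^esub> a x \<otimes>\<^bsub>sgrp A n\<^esub> f n x [^]\<^bsub>sgrp A n\<^esub> b x"
      by (rule G.int_pow_mult)
  next
    show "(\<lambda>x. f n x [^]\<^bsub>sgrp A n\<^esub> a x \<otimes>\<^bsub>sgrp A n\<^esub> f n x [^]\<^bsub>sgrp A n\<^esub> b x) \<in> ?S \<rightarrow> carrier (sgrp A n)"
      using pi[of a] pi[of b] by (auto intro!: funcsetI)
  qed simp
  also have "\<dots> = finprod (sgrp A n) (\<lambda>x. f n x [^]\<^bsub>sgrp A n\<^esub> a x) ?S \<otimes>\<^bsub>sgrp A n\<^esub> finprod (sgrp A n) (\<lambda>x. f n x [^]\<^bsub>sgrp A n\<^esub> b x) ?S"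
    by (rule G.finprod_multf[OF pi pi])
  also have "\<dots> = F n a \<otimes>\<^bsub>sgrp A n\<^esub> F n b"
    using F_over[OF a fS _ sub] F_over[OF b fS _ sub] by simp
  finally show ?thesis .
qed

lemma F_zero: "F n (\<lambda>x. 0) = \<one>\<^bsub>sgrp A n\<^esub>"
proof -
  interpret G: comm_group "sgrp A n" by (rule A.cg)
  have "supp (\<lambda>x::'a. 0::int) = {}" unfolding supp_def by simp
  then show ?thesis unfolding F_def by simp
qed

lemma F_eta: "x \<in> sS X n \<Longrightarrow> F n (etaZ x) = f n x"
proof -
  interpret G: comm_group "sgrp A n" by (rule A.cg)
  assume x: "x \<in> sS X n"
  have s: "supp (etaZ x) = {x}" unfolding supp_def etaZ_def by auto
  have fx: "f n x \<in> carrier (sgrp A n)" using f_closed[OF x] A.carr by simp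
  show ?thesis unfolding F_def s using fx by (simp add: etaZ_def)
qed

lemma F_neg:
  assumes a: "a \<in> zcarrier X n"
  shows "F n (\<lambda>y. - a y) = inv\<^bsub>sgrp A n\<^esub> F n a"
proof -
  interpret G: comm_group "sgrp A n" by (rule A.cg)
  have na: "(\<lambda>y. - a y) \<in> zcarrier X n" using zc_neg[OF a] .
  have "F n a \<otimes>\<^bsub>sgrp A n\<^esub> F n (\<lambda>y. - a y) = F n (\<lambda>y. a y + - a y)" using F_add[OF a na] by simp
  also have "\<dots> = \<one>\<^bsub>sgrp A n\<^esub>" using F_zero by simp
  finally have e: "F n a \<otimes>\<^bsub>sgrp A n\<^esub> F n (\<lambda>y. - a y) = \<one>\<^bsub>sgrp A n\<^esub>" .
  have c1: "F n a \<in> carrier (sgrp A n)" "F n (\<lambda>y. - a y) \<in> carrier (sgrp A n)"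
    using F_closed[OF a] F_closed[OF na] A.carr by auto
  have "F n (\<lambda>y. - a y) \<otimes>\<^bsub>sgrp A n\<^esub> F n a = \<one>\<^bsub>sgrp A n\<^esub>" using e c1 G.m_comm by simp
  then show ?thesis using G.inv_equality c1 by simp
qed

lemma F_push:
  assumes c: "c \<in> zcarrier X n"
    and \<phi>c: "\<And>x. x \<in> sS X n \<Longrightarrow> \<phi> x \<in> sS X m"
    and h: "group_hom (sgrp A n) (sgrp A m) \<phi>A"
    and comm: "\<And>x. x \<in> sS X n \<Longrightarrow> f m (\<phi> x) = \<phi>A (f n x)"
  shows "F m (zpush \<phi> c) = \<phi>A (F n c)"
proof (rule zc_induct[OF c, where P="\<lambda>c. F m (zpush \<phi> c) = \<phi>A (F n c)"])
  have "F m (zpush \<phi> (\<lambda>x. 0)) = \<one>\<^bsub>sgrp A m\<^esub>" unfolding zpush_zero by (rule F_zero)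
  also have "\<dots> = \<phi>A \<one>\<^bsub>sgrp A n\<^esub>" by (rule group_hom.hom_one[OF h, symmetric])
  also have "\<one>\<^bsub>sgrp A n\<^esub> = F n (\<lambda>x. 0)" by (rule F_zero[symmetric])
  finally show "F m (zpush \<phi> (\<lambda>x. 0)) = \<phi>A (F n (\<lambda>x. 0))" .
next
  fix c x assume cz: "c \<in> zcarrier X n" and xS: "x \<in> sS X n" and IH: "F m (zpush \<phi> c) = \<phi>A (F n c)"
  have ex: "etaZ x \<in> zcarrier X n" using zc_eta[OF xS] .
  have pc: "zpush \<phi> c \<in> zcarrier X m" using zpush_zcarrier[OF cz \<phi>c] .
  have px: "\<phi> x \<in> sS X m" using \<phi>c[OF xS] .
  have e2: "etaZ (\<phi> x) \<in> zcarrier X m" using zc_eta[OF px] .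
  have Fc: "F n c \<in> carrier (sgrp A n)" using F_closed[OF cz] A.carr by simp
  have fx: "f n x \<in> carrier (sgrp A n)" using f_closed[OF xS] A.carr by simp
  have "zpush \<phi> (\<lambda>y. c y + etaZ x y) = (\<lambda>y. zpush \<phi> c y + zpush \<phi> (etaZ x) y)"
    by (rule zpush_add[OF zfin[OF cz] zfin[OF ex]])
  also have "zpush \<phi> (etaZ x) = etaZ (\<phi> x)" by (rule zpush_eta)
  finally have zp: "zpush \<phi> (\<lambda>y. c y + etaZ x y) = (\<lambda>y. zpush \<phi> c y + etaZ (\<phi> x) y)" .
  have "F m (zpush \<phi> (\<lambda>y. c y + etaZ x y)) = F m (zpush \<phi> c) \<otimes>\<^bsub>sgrp A m\<^esub> F m (etaZ (\<phi> x))"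
    unfolding zp by (rule F_add[OF pc e2])
  also have "F m (etaZ (\<phi> x)) = \<phi>A (f n x)" using F_eta[OF px] comm[OF xS] by simp
  also have "F m (zpush \<phi> c) \<otimes>\<^bsub>sgrp A m\<^esub> \<phi>A (f n x) = \<phi>A (F n c \<otimes>\<^bsub>sgrp A n\<^esub> f n x)"
    unfolding IH by (rule group_hom.hom_mult[OF h Fc fx, symmetric])
  also have "F n c \<otimes>\<^bsub>sgrp A n\<^esub> f n x = F n (\<lambda>y. c y + etaZ x y)"
    using F_add[OF cz ex] F_eta[OF xS] by simp
  finally show "F m (zpush \<phi> (\<lambda>y. c y + etaZ x y)) = \<phi>A (F n (\<lambda>y. c y + etaZ x y))" .
next
  fix c x assume cz: "c \<in> zcarrier X n" and xS: "x \<in> sS X n" and IH: "F m (zpush \<phi> c) = \<phi>A (F n c)"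
  have ex: "etaZ x \<in> zcarrier X n" using zc_eta[OF xS] .
  have nex: "(\<lambda>y. - etaZ x y) \<in> zcarrier X n" using zc_neg[OF ex] .
  have pc: "zpush \<phi> c \<in> zcarrier X m" using zpush_zcarrier[OF cz \<phi>c] .
  have px: "\<phi> x \<in> sS X m" using \<phi>c[OF xS] .
  have e2: "etaZ (\<phi> x) \<in> zcarrier X m" using zc_eta[OF px] .
  have ne2: "(\<lambda>y. - etaZ (\<phi> x) y) \<in> zcarrier X m" using zc_neg[OF e2] .
  have Fc: "F n c \<in> carrier (sgrp A n)" using F_closed[OF cz] A.carr by simp
  have fx: "f n x \<in> carrier (sgrp A n)" using f_closed[OF xS] A.carr by simp
  have ifx: "inv\<^bsub>sgrp A n\<^esub> f n x \<in> carrier (sgrp A n)" using A.i_closed f_closed[OF xS] A.carr by simp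
  have "zpush \<phi> (\<lambda>y. c y + - etaZ x y) = (\<lambda>y. zpush \<phi> c y + zpush \<phi> (\<lambda>y. - etaZ x y) y)"
    by (rule zpush_add[OF zfin[OF cz] zfin[OF nex]])
  also have "zpush \<phi> (\<lambda>y. - etaZ x y) = (\<lambda>y. - etaZ (\<phi> x) y)" unfolding zpush_neg zpush_eta ..
  finally have zp: "zpush \<phi> (\<lambda>y. c y + - etaZ x y) = (\<lambda>y. zpush \<phi> c y + - etaZ (\<phi> x) y)" .
  have "F m (zpush \<phi> (\<lambda>y. c y + - etaZ x y)) = F m (zpush \<phi> c) \<otimes>\<^bsub>sgrp A m\<^esub> F m (\<lambda>y. - etaZ (\<phi> x) y)"
    unfolding zp by (rule F_add[OF pc ne2])
  also have "F m (\<lambda>y. - etaZ (\<phi> x) y) = inv\<^bsub>sgrp A m\<^esub> (\<phi>A (f n x))"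
    using F_neg[OF e2] F_eta[OF px] comm[OF xS] by simp
  also have "\<dots> = \<phi>A (inv\<^bsub>sgrp A n\<^esub> f n x)" by (rule group_hom.hom_inv[OF h fx, symmetric])
  also have "F m (zpush \<phi> c) \<otimes>\<^bsub>sgrp A m\<^esub> \<phi>A (inv\<^bsub>sgrp A n\<^esub> f n x) = \<phi>A (F n c \<otimes>\<^bsub>sgrp A n\<^esub> inv\<^bsub>sgrp A n\<^esub> f n x)"
    unfolding IH by (rule group_hom.hom_mult[OF h Fc ifx, symmetric])
  also have "F n c \<otimes>\<^bsub>sgrp A n\<^esub> inv\<^bsub>sgrp A n\<^esub> f n x = F n (\<lambda>y. c y + - etaZ x y)"
    using F_add[OF cz nex] F_neg[OF ex] F_eta[OF xS] by simp
  finally show "F m (zpush \<phi> (\<lambda>y. c y + - etaZ x y)) = \<phi>A (F n (\<lambda>y. c y + - etaZ x y))" .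
qed

end


context univ
begin

lemma F_face:
  assumes c: "c \<in> zcarrier X (Suc n)" and i: "i \<le> Suc n"
  shows "F n (zpush (sd X (Suc n) i) c) = sd A (Suc n) i (F (Suc n) c)"
proof (rule F_push[OF c])
  fix x assume "x \<in> sS X (Suc n)" then show "sd X (Suc n) i x \<in> sS X n" by (rule simp_d_closed[OF smpX _ i])
next
  show "group_hom (sgrp A (Suc n)) (sgrp A n) (sd A (Suc n) i)" by (rule A.d_hom[OF i])
next
  fix x assume "x \<in> sS X (Suc n)" then show "f n (sd X (Suc n) i x) = sd A (Suc n) i (f (Suc n) x)" by (rule f_d[OF _ i])
qed

lemma F_degen:
  assumes c: "c \<in> zcarrier X n" and i: "i \<le> n"
  shows "F (Suc n) (zpush (ss X n i) c) = ss A n i (F n c)"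
proof (rule F_push[OF c])
  fix x assume "x \<in> sS X n" then show "ss X n i x \<in> sS X (Suc n)" by (rule simp_s_closed[OF smpX _ i])
next
  show "group_hom (sgrp A n) (sgrp A (Suc n)) (ss A n i)" by (rule A.s_hom[OF i])
next
  fix x assume "x \<in> sS X n" then show "f (Suc n) (ss X n i x) = ss A n i (f n x)" by (rule f_s[OF _ i])
qed

lemma F_thin:
  assumes c: "c \<in> thinS (ZZ X) (Suc n)"
  shows "F (Suc n) c \<in> thinS A (Suc n)"
proof -
  obtain xs where xs: "set xs \<subseteq> {y. degenerate (ZZ X) (Suc n) y}"
     "c = foldr (\<lambda>a b. a \<otimes>\<^bsub>zgrp X (Suc n)\<^esub> b) xs \<one>\<^bsub>zgrp X (Suc n)\<^esub>"
    using c unfolding thinS_def ZZ_simps by blast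
  have "set xs \<subseteq> {y. degenerate (ZZ X) (Suc n) y} \<Longrightarrow>
     foldr (\<lambda>a b. a \<otimes>\<^bsub>zgrp X (Suc n)\<^esub> b) xs \<one>\<^bsub>zgrp X (Suc n)\<^esub> \<in> zcarrier X (Suc n) \<and>
     F (Suc n) (foldr (\<lambda>a b. a \<otimes>\<^bsub>zgrp X (Suc n)\<^esub> b) xs \<one>\<^bsub>zgrp X (Suc n)\<^esub>) \<in> thinS A (Suc n)"
  proof (induction xs)
    case Nil
    have "\<one>\<^bsub>sgrp A (Suc n)\<^esub> \<in> thinS A (Suc n)" by (rule A.thin_one)
    then show ?case using F_zero zc_zero by simp
  next
    case (Cons a xs)
    then have da: "degenerate (ZZ X) (Suc n) a" and IH: "foldr (\<lambda>a b. a \<otimes>\<^bsub>zgrp X (Suc n)\<^esub> b) xs \<one>\<^bsub>zgrp X (Suc n)\<^esub> \<in> zcarrier X (Suc n)"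
       "F (Suc n) (foldr (\<lambda>a b. a \<otimes>\<^bsub>zgrp X (Suc n)\<^esub> b) xs \<one>\<^bsub>zgrp X (Suc n)\<^esub>) \<in> thinS A (Suc n)"
      by auto
    obtain y i where yi: "y \<in> zcarrier X n" "i \<le> n" "a = zpush (ss X n i) y"
      using da unfolding degenerate_def ZZ_simps by auto
    have az: "a \<in> zcarrier X (Suc n)" using zs_zc yi by simp
    let ?r = "foldr (\<lambda>a b. a \<otimes>\<^bsub>zgrp X (Suc n)\<^esub> b) xs \<one>\<^bsub>zgrp X (Suc n)\<^esub>"
    have "F (Suc n) a = ss A n i (F n y)" using F_degen[OF yi(1) yi(2)] yi(3) by simp
    moreover have "F n y \<in> sS A n" using F_closed[OF yi(1)] .
    ultimately have ta: "F (Suc n) a \<in> thinS A (Suc n)"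
      using A.thin_degen[of "F n y" n i] yi by simp
    have "F (Suc n) (a \<otimes>\<^bsub>zgrp X (Suc n)\<^esub> ?r) = F (Suc n) a \<otimes>\<^bsub>sgrp A (Suc n)\<^esub> F (Suc n) ?r"
      using F_add[OF az IH(1)] by simp
    moreover have "F (Suc n) a \<otimes>\<^bsub>sgrp A (Suc n)\<^esub> F (Suc n) ?r \<in> thinS A (Suc n)"
      by (rule A.thin_mult[OF ta IH(2)])
    moreover have "a \<otimes>\<^bsub>zgrp X (Suc n)\<^esub> ?r \<in> zcarrier X (Suc n)" using zc_add[OF az IH(1)] by simp
    ultimately show ?case by simp
  qed
  then show ?thesis using xs by simp
qed

lemma F_gen:
  assumes hn: "horn X n k h"
  shows "F (Suc n) (FZ n k h) = f (Suc n) (fill X n k h)"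
proof -
  have k: "k \<le> Suc n" using hn unfolding horn_def by simp
  have FZh: "filler (ZZ X) n k (\<lambda>i. etaZ (h i)) (FZ n k h)" "FZ n k h \<in> thinS (ZZ X) (Suc n)"
    using FZ[OF hn] by auto
  have Ez: "FZ n k h \<in> zcarrier X (Suc n)" using FZ_zc[OF hn] .
  have fl: "filler X n k h (fill X n k h)" "fill X n k h \<in> sthin X (Suc n)" using fillX[OF hn] by auto
  have x0: "fill X n k h \<in> sS X (Suc n)" using fl(2) thin_sub by blast
  show ?thesis
  proof (rule A.thin_filler_unique[OF _ F_thin[OF FZh(2)] _ f_thin[OF fl(2)] k])
    show "filler A n k (\<lambda>i. f n (h i)) (F (Suc n) (FZ n k h))" unfolding filler_def
    proof (intro conjI allI impI)
      show "F (Suc n) (FZ n k h) \<in> sS A (Suc n)" by (rule F_closed[OF Ez])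
      fix i assume i: "i \<le> Suc n" "i \<noteq> k"
      have "sd A (Suc n) i (F (Suc n) (FZ n k h)) = F n (zpush (sd X (Suc n) i) (FZ n k h))"
        by (rule F_face[OF Ez i(1), symmetric])
      also have "zpush (sd X (Suc n) i) (FZ n k h) = etaZ (h i)"
        using FZh(1) i unfolding filler_def ZZ_simps by simp
      also have "F n (etaZ (h i)) = f n (h i)"
        by (rule F_eta) (use hn i in \<open>unfold horn_def, blast\<close>)
      finally show "sd A (Suc n) i (F (Suc n) (FZ n k h)) = f n (h i)" .
    qed
  next
    show "filler A n k (\<lambda>i. f n (h i)) (f (Suc n) (fill X n k h))" unfolding filler_def
    proof (intro conjI allI impI)
      show "f (Suc n) (fill X n k h) \<in> sS A (Suc n)" by (rule f_closed[OF x0])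
      fix i assume i: "i \<le> Suc n" "i \<noteq> k"
      have "sd A (Suc n) i (f (Suc n) (fill X n k h)) = f n (sd X (Suc n) i (fill X n k h))"
        by (rule f_d[OF x0 i(1), symmetric])
      also have "sd X (Suc n) i (fill X n k h) = h i" using fl(1) i unfolding filler_def by simp
      finally show "sd A (Suc n) i (f (Suc n) (fill X n k h)) = f n (h i)" .
    qed
  qed
qed

lemma F_relN: "(n, c) \<in> relgen X \<Longrightarrow> F n c = \<one>\<^bsub>sgrp A n\<^esub>"
proof (induction rule: relgen.induct)
  case (gen n k h)
  have Ez: "FZ n k h \<in> zcarrier X (Suc n)" using FZ_zc[OF gen] .
  have "fill X n k h \<in> sthin X (Suc n)" using fillX[OF gen] by blast
  then have x0: "fill X n k h \<in> sS X (Suc n)" using thin_sub by blast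
  have ez: "etaZ (fill X n k h) \<in> zcarrier X (Suc n)" using zc_eta[OF x0] .
  have e: "(\<lambda>y. FZ n k h y - etaZ (fill X n k h) y) = (\<lambda>y. FZ n k h y + - etaZ (fill X n k h) y)" by simp
  have "F (Suc n) (\<lambda>y. FZ n k h y + - etaZ (fill X n k h) y) = F (Suc n) (FZ n k h) \<otimes>\<^bsub>sgrp A (Suc n)\<^esub> F (Suc n) (\<lambda>y. - etaZ (fill X n k h) y)"
    by (rule F_add[OF Ez zc_neg[OF ez]])
  also have "F (Suc n) (\<lambda>y. - etaZ (fill X n k h) y) = inv\<^bsub>sgrp A (Suc n)\<^esub> f (Suc n) (fill X n k h)"
    using F_neg[OF ez] F_eta[OF x0] by simp
  also have "F (Suc n) (FZ n k h) = f (Suc n) (fill X n k h)" by (rule F_gen[OF gen])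
  also have "f (Suc n) (fill X n k h) \<otimes>\<^bsub>sgrp A (Suc n)\<^esub> inv\<^bsub>sgrp A (Suc n)\<^esub> f (Suc n) (fill X n k h) = \<one>\<^bsub>sgrp A (Suc n)\<^esub>"
    by (rule A.g_r_inv[OF f_closed[OF x0]])
  finally show ?case unfolding e .
next
  case (zero n) show ?case by (rule F_zero)
next
  case (add n f g)
  have "F n (\<lambda>y. f y + g y) = F n f \<otimes>\<^bsub>sgrp A n\<^esub> F n g"
    by (rule F_add[OF relgen_zc[OF add.hyps(1)] relgen_zc[OF add.hyps(2)]])
  then show ?case using add.IH A.g_r_one[OF A.o_closed] by simp
next
  case (neg n f)
  have "F n (\<lambda>y. - f y) = inv\<^bsub>sgrp A n\<^esub> F n f" by (rule F_neg[OF relgen_zc[OF neg.hyps]])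
  then show ?case using neg.IH A.g_inv_one by simp
next
  case (face n f i)
  have "F n (zpush (sd X (Suc n) i) f) = sd A (Suc n) i (F (Suc n) f)"
    by (rule F_face[OF relgen_zc[OF face.hyps(1)] face.hyps(2)])
  then show ?case using face.IH A.d_one[OF face.hyps(2)] by simp
next
  case (degen n f i)
  have "F (Suc n) (zpush (ss X n i) f) = ss A n i (F n f)"
    by (rule F_degen[OF relgen_zc[OF degen.hyps(1)] degen.hyps(2)])
  then show ?case using degen.IH A.s_one[OF degen.hyps(2)] by simp
qed

end


context univ
begin

definition g :: "nat \<Rightarrow> ('a \<Rightarrow> int) set \<Rightarrow> 'b" where
  "g n C = F n (SOME c. c \<in> C)"

lemma F_relN': "h \<in> relN X n \<Longrightarrow> F n h = \<one>\<^bsub>sgrp A n\<^esub>"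
  unfolding relN_def using F_relN by simp

lemma g_cls: assumes b: "b \<in> zcarrier X n" shows "g n (cls n b) = F n b"
proof -
  have ex: "\<exists>a. a \<in> cls n b" using cls_mem[OF b] by blast
  have s: "(SOME a. a \<in> cls n b) \<in> cls n b" using someI_ex[OF ex] .
  then obtain h where h: "h \<in> relN X n" "(SOME a. a \<in> cls n b) = (\<lambda>y. h y + b y)" using cls_elem by blast
  have "g n (cls n b) = F n (\<lambda>y. h y + b y)" unfolding g_def h(2) ..
  also have "\<dots> = F n h \<otimes>\<^bsub>sgrp A n\<^esub> F n b" by (rule F_add[OF relN_zc'[OF h(1)] b])
  also have "\<dots> = F n b" using F_relN'[OF h(1)] A.g_l_one[OF F_closed[OF b]] by simp
  finally show ?thesis .
qed

lemma g_hom: "g n \<in> hom (zgrp X n Mod relN X n) (sgrp A n)"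
  unfolding hom_def
proof (intro CollectI conjI ballI funcsetI)
  fix C assume "C \<in> carrier (zgrp X n Mod relN X n)"
  then obtain b where b: "b \<in> zcarrier X n" "C = cls n b" using cls_rep Q_carrier by metis
  show "g n C \<in> carrier (sgrp A n)" using g_cls[OF b(1)] F_closed[OF b(1)] b(2) A.carr by simp
next
  fix C D assume "C \<in> carrier (zgrp X n Mod relN X n)" "D \<in> carrier (zgrp X n Mod relN X n)"
  then obtain b d where b: "b \<in> zcarrier X n" "C = cls n b" and d: "d \<in> zcarrier X n" "D = cls n d"
    using cls_rep Q_carrier by metis
  have bd: "(\<lambda>y. b y + d y) \<in> zcarrier X n" using zc_add[OF b(1) d(1)] .
  have "g n (C \<otimes>\<^bsub>zgrp X n Mod relN X n\<^esub> D) = g n (cls n (\<lambda>y. b y + d y))"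
    using cls_mult[OF b(1) d(1)] b d by simp
  also have "\<dots> = F n (\<lambda>y. b y + d y)" by (rule g_cls[OF bd])
  also have "\<dots> = F n b \<otimes>\<^bsub>sgrp A n\<^esub> F n d" by (rule F_add[OF b(1) d(1)])
  also have "\<dots> = g n C \<otimes>\<^bsub>sgrp A n\<^esub> g n D" using g_cls b d by simp
  finally show "g n (C \<otimes>\<^bsub>zgrp X n Mod relN X n\<^esub> D) = g n C \<otimes>\<^bsub>sgrp A n\<^esub> g n D" .
qed

lemma g_sAbhom: "sAbhom (AbST X) A g"
  unfolding sAbhom_def ssmap_def AbST_simps
proof (intro conjI allI impI)
  fix n C assume "C \<in> rcosets\<^bsub>zgrp X n\<^esub> relN X n"
  then obtain b where b: "b \<in> zcarrier X n" "C = cls n b" using cls_rep by blast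
  show "g n C \<in> sS A n" using g_cls[OF b(1)] F_closed[OF b(1)] b(2) by simp
next
  fix n i C assume a: "C \<in> rcosets\<^bsub>zgrp X (Suc n)\<^esub> relN X (Suc n) \<and> i \<le> Suc n"
  then obtain b where b: "b \<in> zcarrier X (Suc n)" "C = cls (Suc n) b" using cls_rep by blast
  have i: "i \<le> Suc n" using a by simp
  have "g n (sd (AbST X) (Suc n) i C) = g n (cls n (zpush (sd X (Suc n) i) b))" using sd_cls[OF b(1) i] b(2) by simp
  also have "\<dots> = F n (zpush (sd X (Suc n) i) b)" by (rule g_cls[OF zd_zc[OF b(1) i]])
  also have "\<dots> = sd A (Suc n) i (F (Suc n) b)" by (rule F_face[OF b(1) i])
  also have "\<dots> = sd A (Suc n) i (g (Suc n) C)" using g_cls[OF b(1)] b(2) by simp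
  finally show "g n (sd (AbST X) (Suc n) i C) = sd A (Suc n) i (g (Suc n) C)" .
next
  fix n i C assume a: "C \<in> rcosets\<^bsub>zgrp X n\<^esub> relN X n \<and> i \<le> n"
  then obtain b where b: "b \<in> zcarrier X n" "C = cls n b" using cls_rep by blast
  have i: "i \<le> n" using a by simp
  have "g (Suc n) (ss (AbST X) n i C) = g (Suc n) (cls (Suc n) (zpush (ss X n i) b))" using ss_cls[OF b(1) i] b(2) by simp
  also have "\<dots> = F (Suc n) (zpush (ss X n i) b)" by (rule g_cls[OF zs_zc[OF b(1) i]])
  also have "\<dots> = ss A n i (F n b)" by (rule F_degen[OF b(1) i])
  also have "\<dots> = ss A n i (g n C)" using g_cls[OF b(1)] b(2) by simp
  finally show "g (Suc n) (ss (AbST X) n i C) = ss A n i (g n C)" .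
next
  fix n show "g n \<in> hom (zgrp X n Mod relN X n) (sgrp A n)" by (rule g_hom)
qed

lemma g_unit: "x \<in> sS X n \<Longrightarrow> g n (unitAb X n x) = f n x"
  unfolding unitAb_def using g_cls[OF zc_eta] F_eta by simp

lemma Q_inv_eta:
  assumes xS: "x \<in> sS X n"
  shows "cls n (\<lambda>y. - etaZ x y) = inv\<^bsub>zgrp X n Mod relN X n\<^esub> cls n (etaZ x)"
proof -
  interpret Q: comm_group "zgrp X n Mod relN X n" by (rule Q_cg)
  have ex: "etaZ x \<in> zcarrier X n" using zc_eta[OF xS] .
  have nex: "(\<lambda>y. - etaZ x y) \<in> zcarrier X n" using zc_neg[OF ex] .
  have "cls n (\<lambda>y. - etaZ x y) \<otimes>\<^bsub>zgrp X n Mod relN X n\<^esub> cls n (etaZ x) = cls n (\<lambda>y. - etaZ x y + etaZ x y)"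
    by (rule cls_mult[OF nex ex])
  also have "\<dots> = cls n (\<lambda>y. 0)" by simp
  also have "\<dots> = \<one>\<^bsub>zgrp X n Mod relN X n\<^esub>" using cls_zero by simp
  finally have e: "cls n (\<lambda>y. - etaZ x y) \<otimes>\<^bsub>zgrp X n Mod relN X n\<^esub> cls n (etaZ x) = \<one>\<^bsub>zgrp X n Mod relN X n\<^esub>" .
  have c1: "cls n (etaZ x) \<in> carrier (zgrp X n Mod relN X n)" using cls_in[OF ex] Q_carrier by simp
  have c2: "cls n (\<lambda>y. - etaZ x y) \<in> carrier (zgrp X n Mod relN X n)" using cls_in[OF nex] Q_carrier by simp
  show ?thesis using Q.inv_equality[OF e c1 c2] by simp
qed

lemma g_unique:
  assumes g': "sAbhom (AbST X) A g'" and u: "\<forall>n. \<forall>x \<in> sS X n. g' n (unitAb X n x) = f n x"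
  shows "\<forall>n. \<forall>y \<in> sS (AbST X) n. g' n y = g n y"
proof (intro allI ballI)
  fix n y assume "y \<in> sS (AbST X) n"
  then obtain b where b: "b \<in> zcarrier X n" "y = cls n b" using cls_rep by auto
  have hg: "g' n \<in> hom (zgrp X n Mod relN X n) (sgrp A n)" using g' unfolding sAbhom_def by simp
  have gh: "group_hom (zgrp X n Mod relN X n) (sgrp A n) (g' n)"
    unfolding group_hom_def group_hom_axioms_def
    using hg Q_cg A.grp comm_group_def by blast
  have "g' n (cls n b) = F n b"
  proof (rule zc_induct[OF b(1), where P="\<lambda>c. g' n (cls n c) = F n c"])
    have "g' n (cls n (\<lambda>x. 0)) = g' n \<one>\<^bsub>zgrp X n Mod relN X n\<^esub>" using cls_zero by simp
    also have "\<dots> = \<one>\<^bsub>sgrp A n\<^esub>" by (rule group_hom.hom_one[OF gh])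
    also have "\<dots> = F n (\<lambda>x. 0)" using F_zero by simp
    finally show "g' n (cls n (\<lambda>x. 0)) = F n (\<lambda>x. 0)" .
  next
    fix c x assume cz: "c \<in> zcarrier X n" and xS: "x \<in> sS X n" and IH: "g' n (cls n c) = F n c"
    have ex: "etaZ x \<in> zcarrier X n" using zc_eta[OF xS] .
    have c1: "cls n c \<in> carrier (zgrp X n Mod relN X n)" using cls_in[OF cz] Q_carrier by simp
    have c2: "cls n (etaZ x) \<in> carrier (zgrp X n Mod relN X n)" using cls_in[OF ex] Q_carrier by simp
    have "g' n (cls n (\<lambda>y. c y + etaZ x y)) = g' n (cls n c \<otimes>\<^bsub>zgrp X n Mod relN X n\<^esub> cls n (etaZ x))"
      using cls_mult[OF cz ex] by simp
    also have "\<dots> = g' n (cls n c) \<otimes>\<^bsub>sgrp A n\<^esub> g' n (cls n (etaZ x))" by (rule group_hom.hom_mult[OF gh c1 c2])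
    also have "g' n (cls n (etaZ x)) = f n x" using u xS unfolding unitAb_def by blast
    also have "g' n (cls n c) \<otimes>\<^bsub>sgrp A n\<^esub> f n x = F n (\<lambda>y. c y + etaZ x y)"
      using IH F_add[OF cz ex] F_eta[OF xS] by simp
    finally show "g' n (cls n (\<lambda>y. c y + etaZ x y)) = F n (\<lambda>y. c y + etaZ x y)" .
  next
    fix c x assume cz: "c \<in> zcarrier X n" and xS: "x \<in> sS X n" and IH: "g' n (cls n c) = F n c"
    have ex: "etaZ x \<in> zcarrier X n" using zc_eta[OF xS] .
    have nex: "(\<lambda>y. - etaZ x y) \<in> zcarrier X n" using zc_neg[OF ex] .
    have c1: "cls n c \<in> carrier (zgrp X n Mod relN X n)" using cls_in[OF cz] Q_carrier by simp
    have c2: "cls n (\<lambda>y. - etaZ x y) \<in> carrier (zgrp X n Mod relN X n)" using cls_in[OF nex] Q_carrier by simp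
    have c3: "cls n (etaZ x) \<in> carrier (zgrp X n Mod relN X n)" using cls_in[OF ex] Q_carrier by simp
    have "g' n (cls n (\<lambda>y. c y + - etaZ x y)) = g' n (cls n c \<otimes>\<^bsub>zgrp X n Mod relN X n\<^esub> cls n (\<lambda>y. - etaZ x y))"
      using cls_mult[OF cz nex] by simp
    also have "\<dots> = g' n (cls n c) \<otimes>\<^bsub>sgrp A n\<^esub> g' n (cls n (\<lambda>y. - etaZ x y))" by (rule group_hom.hom_mult[OF gh c1 c2])
    also have "g' n (cls n (\<lambda>y. - etaZ x y)) = inv\<^bsub>sgrp A n\<^esub> g' n (cls n (etaZ x))"
      unfolding Q_inv_eta[OF xS] by (rule group_hom.hom_inv[OF gh c3])
    also have "g' n (cls n (etaZ x)) = f n x" using u xS unfolding unitAb_def by blast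
    also have "g' n (cls n c) \<otimes>\<^bsub>sgrp A n\<^esub> inv\<^bsub>sgrp A n\<^esub> f n x = F n (\<lambda>y. c y + - etaZ x y)"
      using IH F_add[OF cz nex] F_neg[OF ex] F_eta[OF xS] by simp
    finally show "g' n (cls n (\<lambda>y. c y + - etaZ x y)) = F n (\<lambda>y. c y + - etaZ x y)" .
  qed
  then show "g' n y = g n y" using g_cls[OF b(1)] b(2) by simp
qed

end

theorem mainTheorem8:
  fixes X :: "'a stcx" and A :: "'b sab"
  assumes "sTcomplex X" and "sAbGrp A"
  shows "sAbGrp (AbST X) \<and> sTmap X (UsT (AbST X)) (unitAb X) \<and>
    (\<forall>f. sTmap X (UsT A) f \<longrightarrow>
      (\<exists>g. sAbhom (AbST X) A g \<and> (\<forall>n. \<forall>x \<in> sS X n. g n (unitAb X n x) = f n x) \<and>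
         (\<forall>g'. sAbhom (AbST X) A g' \<and> (\<forall>n. \<forall>x \<in> sS X n. g' n (unitAb X n x) = f n x)
            \<longrightarrow> (\<forall>n. \<forall>y \<in> sS (AbST X) n. g' n y = g n y))))"
proof (intro conjI allI impI)
  interpret S: stc X by (rule stc.intro[OF assms(1)])
  show "sAbGrp (AbST X)" by (rule S.AbST_sab)
  show "sTmap X (UsT (AbST X)) (unitAb X)" by (rule S.unitAb_T)
  fix f assume fT: "sTmap X (UsT A) f"
  interpret U: univ X A f
    by (intro univ.intro univ_axioms.intro stc.intro sabg.intro assms fT)
  show "\<exists>g. sAbhom (AbST X) A g \<and> (\<forall>n. \<forall>x \<in> sS X n. g n (unitAb X n x) = f n x) \<and>
         (\<forall>g'. sAbhom (AbST X) A g' \<and> (\<forall>n. \<forall>x \<in> sS X n. g' n (unitAb X n x) = f n x)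
            \<longrightarrow> (\<forall>n. \<forall>y \<in> sS (AbST X) n. g' n y = g n y))"
  proof (intro exI conjI allI impI ballI)
    show "sAbhom (AbST X) A U.g" by (rule U.g_sAbhom)
  next
    fix n x assume "x \<in> sS X n" then show "U.g n (unitAb X n x) = f n x" by (rule U.g_unit)
  next
    fix g' n y assume a: "sAbhom (AbST X) A g' \<and> (\<forall>n. \<forall>x \<in> sS X n. g' n (unitAb X n x) = f n x)"
      and y: "y \<in> sS (AbST X) n"
    show "g' n y = U.g n y" using U.g_unique a y by blast
  qed
qed


end
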